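(* Let $[\mathbf{T},\mathbf{o}]$ be a unimodular random rooted Family Tree. Then the distribution of $[\mathbf{T},\mathbf{o}]$ is completely determined by the distribution of the descendant tree $[D(\mathbf{o}),\mathbf{o}]$ of its root.
   Context: A Family Tree is a locally finite directed tree in which every vertex has out-degree at most one (the out-neighbour is the parent). $D(\mathbf{o})$ is the subtree of $\mathbf{o}$ and all vertices having a directed path to $\mathbf{o}$, rooted at $\mathbf{o}$. A random rooted network $[\mathbf{G},\mathbf{o}]$ is unimodular if $\mathbb{E}[\sum_{u\in V(\mathbf{G})}h([\mathbf{G},\mathbf{o},u])]=\mathbb{E}[\sum_{u\in V(\mathbf{G})}h([\mathbf{G},u,\mathbf{o}])]$ for every measurable $h\ge0$ on isomorphism classes of doubly rooted networks. *)

theory Defs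
  imports "HOL-Probability.Probability"
begin

text \<open>A (possibly infinite) directed graph with countable vertex set V (a subset of nat)
  and a partial parent map p (out-degree at most one).  Outside V, p is None.\<close>
type_synonym ftree = "nat set \<times> (nat \<Rightarrow> nat option)"

definition adj :: "ftree \<Rightarrow> nat rel" where
  "adj T = {(u,v). u \<in> fst T \<and> v \<in> fst T \<and> (snd T u = Some v \<or> snd T v = Some u)}"

text \<open>Tree = underlying undirected multigraph connected and without cycles
  (no loops, no 2-cycles, no simple cycles of length at least 3).\<close>
definition family_tree :: "ftree \<Rightarrow> bool" where
  "family_tree T \<longleftrightarrow>
     (\<forall>v. snd T v \<noteq> None \<longrightarrow> v \<in> fst T \<and> the (snd T v) \<in> fst T)
   \<and> (\<forall>v. snd T v \<noteq> Some v)
   \<and> (\<forall>u v. \<not> (snd T u = Some v \<and> snd T v = Some u))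
   \<and> (\<forall>u\<in>fst T. finite {w. snd T w = Some u})
   \<and> (\<forall>u\<in>fst T. \<forall>v\<in>fst T. (u,v) \<in> (adj T)\<^sup>*)
   \<and> \<not> (\<exists>cs. 3 \<le> length cs \<and> distinct cs \<and> set cs \<subseteq> fst T \<and>
           (\<forall>i<length cs. (cs!i, cs!((i+1) mod length cs)) \<in> adj T))"

definition RFT :: "(ftree \<times> nat) set" where
  "RFT = {(T,rt). family_tree T \<and> rt \<in> fst T}"

definition DRFT :: "(ftree \<times> nat \<times> nat) set" where
  "DRFT = {(T,rt,v). (T,rt) \<in> RFT \<and> v \<in> fst T}"

definition ball_set :: "ftree \<Rightarrow> nat \<Rightarrow> nat \<Rightarrow> nat set" where
  "ball_set T rt r = {v. \<exists>k\<le>r. (rt,v) \<in> (adj T) ^^ k}"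

definition restr :: "ftree \<Rightarrow> nat set \<Rightarrow> ftree" where
  "restr T B = (B \<inter> fst T,
     \<lambda>v. if v \<in> B \<and> (case snd T v of Some w \<Rightarrow> w \<in> B | None \<Rightarrow> False) then snd T v else None)"

definition ft_iso :: "ftree \<Rightarrow> ftree \<Rightarrow> (nat \<Rightarrow> nat) \<Rightarrow> bool" where
  "ft_iso T T' f \<longleftrightarrow> bij_betw f (fst T) (fst T') \<and>
     (\<forall>v\<in>fst T. snd T' (f v) = map_option f (snd T v))"

definition rooted_iso :: "ftree \<times> nat \<Rightarrow> ftree \<times> nat \<Rightarrow> bool" where
  "rooted_iso G H \<longleftrightarrow> (\<exists>f. ft_iso (fst G) (fst H) f \<and> f (snd G) = snd H)"

definition doubly_iso :: "ftree \<times> nat \<times> nat \<Rightarrow> ftree \<times> nat \<times> nat \<Rightarrow> bool" where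
  "doubly_iso G H \<longleftrightarrow> (\<exists>f. ft_iso (fst G) (fst H) f \<and>
      f (fst (snd G)) = fst (snd H) \<and> f (snd (snd G)) = snd (snd H))"

text \<open>Measurable space of rooted Family Trees; the sigma-algebra is the Borel
  sigma-algebra of the local topology, generated by the events
  "the r-ball around the root is isomorphic to H".  All its sets are
  isomorphism-invariant, so it is the space of isomorphism classes.\<close>
definition rooted_space :: "(ftree \<times> nat) measure" where
  "rooted_space = sigma RFT
     {{G \<in> RFT. rooted_iso (restr (fst G) (ball_set (fst G) (snd G) r), snd G) H} | r H. True}"

definition doubly_space :: "(ftree \<times> nat \<times> nat) measure" where
  "doubly_space = sigma DRFT
     {{(T,rt,v) \<in> DRFT. v \<in> ball_set T rt r \<and>
          doubly_iso (restr T (ball_set T rt r), rt, v) H} | r H. True}"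

definition unimodular :: "(ftree \<times> nat) measure \<Rightarrow> bool" where
  "unimodular M \<longleftrightarrow>
    (\<forall>h :: ftree \<times> nat \<times> nat \<Rightarrow> ennreal. h \<in> borel_measurable doubly_space \<longrightarrow>
       (\<integral>\<^sup>+ G. (\<integral>\<^sup>+ u. h (fst G, snd G, u) \<partial>count_space (fst (fst G))) \<partial>M)
     = (\<integral>\<^sup>+ G. (\<integral>\<^sup>+ u. h (fst G, u, snd G) \<partial>count_space (fst (fst G))) \<partial>M))"

definition descendants :: "ftree \<Rightarrow> nat \<Rightarrow> nat set" where
  "descendants T rt = {v. (v,rt) \<in> {(a,b). snd T a = Some b}\<^sup>*}"

definition desc_tree :: "ftree \<times> nat \<Rightarrow> ftree \<times> nat" where
  "desc_tree G = ((descendants (fst G) (snd G),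
      \<lambda>v. if v \<in> descendants (fst G) (snd G) \<and> v \<noteq> snd G then snd (fst G) v else None),
      snd G)"

end

theory Submission
  imports Defs
begin

definition wf :: "ftree \<Rightarrow> bool" where
  "wf T \<longleftrightarrow> (\<forall>v. snd T v \<noteq> None \<longrightarrow> v \<in> fst T \<and> the (snd T v) \<in> fst T)"

definition prel :: "ftree \<Rightarrow> nat rel" where
  "prel T = {(a,b). snd T a = Some b}"

fun anc :: "ftree \<Rightarrow> nat \<Rightarrow> nat \<Rightarrow> nat option" where
  "anc T 0 v = Some v"
| "anc T (Suc k) v = (case snd T v of None \<Rightarrow> None | Some w \<Rightarrow> anc T k w)"

lemma ft_wf: "family_tree T \<Longrightarrow> wf T"
  unfolding family_tree_def wf_def by blast

lemma ft_noloop: "family_tree T \<Longrightarrow> snd T v \<noteq> Some v"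
  unfolding family_tree_def by blast

lemma ft_no2: "family_tree T \<Longrightarrow> snd T u = Some v \<Longrightarrow> snd T v = Some u \<Longrightarrow> False"
  unfolding family_tree_def by blast

lemma ft_locfin: "family_tree T \<Longrightarrow> u \<in> fst T \<Longrightarrow> finite {w. snd T w = Some u}"
  unfolding family_tree_def by blast

lemma ft_conn: "family_tree T \<Longrightarrow> u \<in> fst T \<Longrightarrow> v \<in> fst T \<Longrightarrow> (u,v) \<in> (adj T)\<^sup>*"
  unfolding family_tree_def by blast

lemma ft_nocyc: "family_tree T \<Longrightarrow> 3 \<le> length cs \<Longrightarrow> distinct cs \<Longrightarrow> set cs \<subseteq> fst T \<Longrightarrow>
   (\<forall>i<length cs. (cs!i, cs!((i+1) mod length cs)) \<in> adj T) \<Longrightarrow> False"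
  unfolding family_tree_def by blast

lemma wfD: "wf T \<Longrightarrow> snd T v = Some w \<Longrightarrow> v \<in> fst T \<and> w \<in> fst T"
  unfolding wf_def by force

lemma wf_restr: "wf T \<Longrightarrow> wf (restr T B)"
  unfolding wf_def restr_def by (auto split: option.splits if_splits)

lemma adj_sym: "(u,v) \<in> adj T \<Longrightarrow> (v,u) \<in> adj T"
  unfolding adj_def by auto

lemma adj_V: "(u,v) \<in> adj T \<Longrightarrow> u \<in> fst T \<and> v \<in> fst T"
  unfolding adj_def by auto

lemma anc_add: "anc T (k+l) v = Option.bind (anc T k v) (anc T l)"
  by (induction k arbitrary: v) (auto split: option.splits)

lemma anc_one: "anc T (Suc 0) v = snd T v"
  by (auto split: option.splits)

lemma anc_Suc_last: "anc T (Suc k) v = Option.bind (anc T k v) (snd T)"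
proof -
  have "anc T (k + Suc 0) v = Option.bind (anc T k v) (anc T (Suc 0))" by (rule anc_add)
  moreover have "anc T (Suc 0) = snd T" using anc_one[of T] by (rule ext)
  ultimately show ?thesis by (simp del: anc.simps)
qed

lemma anc_None_mono: "anc T k v = None \<Longrightarrow> k \<le> l \<Longrightarrow> anc T l v = None"
proof -
  assume "anc T k v = None" "k \<le> l"
  then obtain d where "l = k + d" by (metis le_add_diff_inverse)
  then show ?thesis using anc_add[of T k d v] \<open>anc T k v = None\<close> by simp
qed

lemma anc_in_V: "wf T \<Longrightarrow> v \<in> fst T \<Longrightarrow> anc T k v = Some x \<Longrightarrow> x \<in> fst T"
proof (induction k arbitrary: v)
  case 0 then show ?case by simp
next
  case (Suc k) then show ?case by (auto split: option.splits dest: wfD)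
qed

lemma anc_rtrancl: "anc T k v = Some x \<Longrightarrow> (v,x) \<in> (prel T)\<^sup>*"
proof (induction k arbitrary: v)
  case 0 then show ?case by simp
next
  case (Suc k)
  then obtain w where w: "snd T v = Some w" "anc T k w = Some x" by (auto split: option.splits)
  then have "(v,w) \<in> prel T" unfolding prel_def by simp
  then show ?case using Suc.IH[OF w(2)] by (meson converse_rtrancl_into_rtrancl)
qed

lemma rtrancl_anc: "(v,x) \<in> (prel T)\<^sup>* \<Longrightarrow> \<exists>k. anc T k v = Some x"
proof (induction rule: converse_rtrancl_induct)
  case base then show ?case by (rule exI[of _ 0]) simp
next
  case (step y z)
  then obtain k where "anc T k z = Some x" by blast
  moreover have "snd T y = Some z" using step(1) unfolding prel_def by simp
  ultimately show ?case by (intro exI[of _ "Suc k"]) simp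
qed

lemma anc_Some_le: "anc T l v = Some x \<Longrightarrow> k \<le> l \<Longrightarrow> \<exists>y. anc T k v = Some y"
  using anc_None_mono by fastforce

lemma acyc_anc:
  assumes ft: "family_tree T" and a: "anc T k v = Some v" and k: "0 < k"
  shows False
proof -
  define k0 where "k0 = (LEAST k. 0 < k \<and> anc T k v = Some v)"
  have k0: "0 < k0" "anc T k0 v = Some v"
    using LeastI[of "\<lambda>k. 0 < k \<and> anc T k v = Some v" k] a k unfolding k0_def by auto
  have min: "\<And>i. 0 < i \<Longrightarrow> i < k0 \<Longrightarrow> anc T i v \<noteq> Some v"
    using not_less_Least unfolding k0_def by blast
  have wfT: "wf T" using ft ft_wf by blast
  have vV: "v \<in> fst T"
  proof -
    obtain w where "snd T v = Some w" using k0 by (cases k0) (auto split: option.splits)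
    then show ?thesis using wfD[OF wfT] by blast
  qed
  have ex: "\<And>i. i \<le> k0 \<Longrightarrow> \<exists>y. anc T i v = Some y" using anc_Some_le k0(2) by blast
  define cs where "cs = map (\<lambda>i. the (anc T i v)) [0..<k0]"
  have len: "length cs = k0" unfolding cs_def by simp
  have csi: "\<And>i. i < k0 \<Longrightarrow> anc T i v = Some (cs!i)"
    unfolding cs_def using ex by fastforce
  have step: "\<And>i. i < k0 \<Longrightarrow> snd T (cs!i) = Some (cs!((i+1) mod k0))"
  proof -
    fix i assume i: "i < k0"
    show "snd T (cs!i) = Some (cs!((i+1) mod k0))"
    proof (cases "i + 1 < k0")
      case True
      have "anc T (Suc i) v = Some (cs!(i+1))" using csi True by (simp del: anc.simps)
      then show ?thesis using anc_Suc_last[of T i v] csi[OF i] True by (simp del: anc.simps)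
    next
      case False
      then have "Suc i = k0" using i by simp
      then have "anc T (Suc i) v = Some v" using k0 by simp
      moreover have "cs!0 = v" using csi[of 0] k0 by simp
      ultimately show ?thesis using anc_Suc_last[of T i v] csi[OF i] \<open>Suc i = k0\<close> by simp
    qed
  qed
  have inV: "set cs \<subseteq> fst T"
  proof
    fix x assume "x \<in> set cs"
    then obtain i where "i < k0" "x = cs!i" using len by (metis in_set_conv_nth)
    then show "x \<in> fst T" using anc_in_V[OF wfT vV csi] by blast
  qed
  have dist: "distinct cs"
  proof (rule ccontr)
    assume "\<not> distinct cs"
    then obtain i i' where ii: "i < i'" "i' < k0" "cs!i = cs!i'"
      using len by (metis distinct_conv_nth linorder_neqE_nat)
    have "anc T (i + (k0 - i')) v = Option.bind (anc T i v) (anc T (k0 - i'))" by (rule anc_add)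
    also have "\<dots> = Option.bind (anc T i' v) (anc T (k0 - i'))" using csi ii by simp
    also have "\<dots> = anc T (i' + (k0 - i')) v" by (rule anc_add[symmetric])
    also have "\<dots> = Some v" using ii k0 by simp
    finally have "anc T (i + (k0 - i')) v = Some v" .
    moreover have "anc T (i + (k0 - i')) v \<noteq> Some v"
      by (rule min) (use ii in linarith)+
    ultimately show False by contradiction
  qed
  show False
  proof (cases "k0 = 1")
    case True
    then show False using step[of 0] csi[of 0] ft_noloop[OF ft] k0 by simp
  next
    case False
    show False
    proof (cases "k0 = 2")
      case True
      then show False using step[of 0] step[of 1] ft_no2[OF ft] by simp
    next
      case False
      then have "3 \<le> length cs" using len \<open>k0 \<noteq> 1\<close> k0 by simp
      moreover have "\<forall>i<length cs. (cs!i, cs!((i+1) mod length cs)) \<in> adj T"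
      proof (intro allI impI)
        fix i assume "i < length cs"
        then have "(i+1) mod k0 < k0" using k0 by simp
        then show "(cs!i, cs!((i+1) mod length cs)) \<in> adj T"
          using step[of i] \<open>i < length cs\<close> len inV unfolding adj_def
          by (auto simp: subset_iff)
      qed
      ultimately show False using ft_nocyc[OF ft _ dist inV] by blast
    qed
  qed
qed

lemma acyc: "family_tree T \<Longrightarrow> (x,x) \<notin> (prel T)\<^sup>+"
proof
  assume ft: "family_tree T" and "(x,x) \<in> (prel T)\<^sup>+"
  then obtain y where "(x,y) \<in> prel T" "(y,x) \<in> (prel T)\<^sup>*" by (meson tranclD)
  then obtain k where "anc T k y = Some x" "snd T x = Some y"
    using rtrancl_anc unfolding prel_def by blast
  then have "anc T (Suc k) x = Some x" by simp
  then show False using acyc_anc[OF ft] by blast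
qed

lemma antisym_prel: "family_tree T \<Longrightarrow> (x,y) \<in> (prel T)\<^sup>* \<Longrightarrow> (y,x) \<in> (prel T)\<^sup>* \<Longrightarrow> x = y"
  using acyc by (metis rtrancl_eq_or_trancl rtrancl_trancl_trancl)



definition ballT :: "ftree \<Rightarrow> nat \<Rightarrow> nat \<Rightarrow> ftree" where
  "ballT T rt r = restr T (ball_set T rt r)"

definition sub :: "ftree \<Rightarrow> ftree \<Rightarrow> bool" where
  "sub T' T \<longleftrightarrow> fst T' \<subseteq> fst T \<and> (\<forall>v. snd T' v \<noteq> None \<longrightarrow> snd T' v = snd T v)
     \<and> (\<forall>v\<in>fst T'. \<forall>w\<in>fst T'. snd T v = Some w \<longrightarrow> snd T' v = Some w)"

lemma sub_adj: "sub T' T \<Longrightarrow> adj T' = adj T \<inter> (fst T' \<times> fst T')"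
proof -
  assume s: "sub T' T"
  have a: "\<And>v w. snd T' v = Some w \<Longrightarrow> snd T v = Some w" using s unfolding sub_def
    by (metis option.distinct(1))
  have b: "\<And>v w. v \<in> fst T' \<Longrightarrow> w \<in> fst T' \<Longrightarrow> snd T v = Some w \<Longrightarrow> snd T' v = Some w"
    using s unfolding sub_def by blast
  have c: "fst T' \<subseteq> fst T" using s unfolding sub_def by blast
  show ?thesis unfolding adj_def using a b c by blast
qed

lemma sub_adj_sub: "sub T' T \<Longrightarrow> adj T' \<subseteq> adj T"
  using sub_adj by blast

lemma sub_trans: "sub A B \<Longrightarrow> sub B C \<Longrightarrow> sub A C"
proof -
  assume s1: "sub A B" and s2: "sub B C"
  have a1: "\<And>v w. snd A v = Some w \<Longrightarrow> snd B v = Some w" using s1 unfolding sub_def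
    by (metis option.distinct(1))
  have a2: "\<And>v w. snd B v = Some w \<Longrightarrow> snd C v = Some w" using s2 unfolding sub_def
    by (metis option.distinct(1))
  have b1: "\<And>v w. v \<in> fst A \<Longrightarrow> w \<in> fst A \<Longrightarrow> snd B v = Some w \<Longrightarrow> snd A v = Some w"
    using s1 unfolding sub_def by blast
  have b2: "\<And>v w. v \<in> fst B \<Longrightarrow> w \<in> fst B \<Longrightarrow> snd C v = Some w \<Longrightarrow> snd B v = Some w"
    using s2 unfolding sub_def by blast
  have c1: "fst A \<subseteq> fst B" using s1 unfolding sub_def by blast
  have c2: "fst B \<subseteq> fst C" using s2 unfolding sub_def by blast
  show ?thesis unfolding sub_def
  proof (intro conjI allI impI ballI)
    show "fst A \<subseteq> fst C" using c1 c2 by blast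
  next
    fix v assume "snd A v \<noteq> None"
    then show "snd A v = snd C v" using a1 a2 by force
  next
    fix v w assume "v \<in> fst A" "w \<in> fst A" "snd C v = Some w"
    then show "snd A v = Some w" using b1 b2 c1 by blast
  qed
qed

lemma sub_anc: "sub T' T \<Longrightarrow> anc T' k v = Some x \<Longrightarrow> anc T k v = Some x"
proof (induction k arbitrary: v)
  case 0 then show ?case by simp
next
  case (Suc k)
  then obtain w where "snd T' v = Some w" "anc T' k w = Some x" by (auto split: option.splits)
  moreover then have "snd T v = Some w" using Suc.prems unfolding sub_def by (metis option.distinct(1))
  ultimately show ?case using Suc by simp
qed

lemma sub_restr_wf: "wf T \<Longrightarrow> sub (restr T B) T"
  unfolding sub_def restr_def wf_def by (auto split: option.splits)

lemma restr_restr: "X \<subseteq> B \<Longrightarrow> restr (restr T B) X = restr T X"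
  unfolding restr_def by (auto simp: fun_eq_iff split: option.splits)

lemma ball_0: "rt \<in> ball_set T rt r"
  unfolding ball_set_def by (rule CollectI, rule exI[of _ 0]) simp

lemma ball_mono: "r \<le> s \<Longrightarrow> ball_set T rt r \<subseteq> ball_set T rt s"
  unfolding ball_set_def using le_trans by blast

lemma relpow_adj_V: "(rt,v) \<in> adj T ^^ k \<Longrightarrow> rt \<in> fst T \<Longrightarrow> v \<in> fst T"
  by (induction k arbitrary: v) (auto dest: adj_V)

lemma ball_V: "rt \<in> fst T \<Longrightarrow> ball_set T rt r \<subseteq> fst T"
  unfolding ball_set_def using relpow_adj_V by blast

lemma ball_trans: "v \<in> ball_set T rt r \<Longrightarrow> ball_set T v s \<subseteq> ball_set T rt (r+s)"
proof
  fix x assume v: "v \<in> ball_set T rt r" and x: "x \<in> ball_set T v s"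
  obtain k where k: "k \<le> r" "(rt,v) \<in> adj T ^^ k" using v unfolding ball_set_def by blast
  obtain l where l: "l \<le> s" "(v,x) \<in> adj T ^^ l" using x unfolding ball_set_def by blast
  have "(rt,x) \<in> adj T ^^ (k + l)" using k l relpow_add[of k l "adj T"] by auto
  then show "x \<in> ball_set T rt (r+s)" unfolding ball_set_def using k l
    by (intro CollectI exI[of _ "k+l"]) auto
qed

lemma relpow_adj_sym: "(u,v) \<in> adj T ^^ k \<Longrightarrow> (v,u) \<in> adj T ^^ k"
proof (induction k arbitrary: v)
  case 0 then show ?case by simp
next
  case (Suc k)
  then obtain y where "(u,y) \<in> adj T ^^ k" "(y,v) \<in> adj T" by (meson relpow_Suc_E)
  then show ?case using Suc.IH adj_sym by (meson relpow_Suc_I2)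
qed

lemma ball_sym: "v \<in> ball_set T rt r \<Longrightarrow> rt \<in> ball_set T v r"
  unfolding ball_set_def using relpow_adj_sym by blast

lemma ball_adj: "v \<in> ball_set T rt r \<Longrightarrow> (v,w) \<in> adj T \<Longrightarrow> w \<in> ball_set T rt (Suc r)"
  unfolding ball_set_def by (auto intro: relpow_Suc_I)

lemma anc_adj: "wf T \<Longrightarrow> anc T k u = Some x \<Longrightarrow> (u,x) \<in> adj T ^^ k"
proof (induction k arbitrary: u)
  case 0 then show ?case by simp
next
  case (Suc k)
  then obtain w where w: "snd T u = Some w" "anc T k w = Some x" by (auto split: option.splits)
  then have "(u,w) \<in> adj T" using wfD[OF Suc.prems(1) w(1)] unfolding adj_def by auto
  then show ?case using Suc.IH[OF Suc.prems(1) w(2)] by (meson relpow_Suc_I2)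
qed

lemma anc_ball: "wf T \<Longrightarrow> anc T k u = Some x \<Longrightarrow> k \<le> r \<Longrightarrow> x \<in> ball_set T u r"
  unfolding ball_set_def using anc_adj by blast

lemma anc_ball': "wf T \<Longrightarrow> anc T k u = Some x \<Longrightarrow> k \<le> r \<Longrightarrow> u \<in> ball_set T x r"
  using anc_ball ball_sym by blast

lemma relpow_mono': "(R::'a rel) \<subseteq> S \<Longrightarrow> R ^^ k \<subseteq> S ^^ k"
proof (induction k)
  case 0 show ?case by simp
next
  case (Suc k) then show ?case by (metis relcomp_mono relpow.simps(2))
qed

lemma sub_ball:
  assumes s: "sub T' T" and bs: "ball_set T rt r \<subseteq> fst T'"
  shows "ball_set T' rt r = ball_set T rt r"
proof
  show "ball_set T' rt r \<subseteq> ball_set T rt r"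
    unfolding ball_set_def using relpow_mono'[OF sub_adj_sub[OF s]] by blast
next
  have "\<And>k v. k \<le> r \<Longrightarrow> (rt,v) \<in> adj T ^^ k \<Longrightarrow> (rt,v) \<in> adj T' ^^ k"
  proof -
    fix k v assume "k \<le> r" "(rt,v) \<in> adj T ^^ k"
    then show "(rt,v) \<in> adj T' ^^ k"
    proof (induction k arbitrary: v)
      case 0 then show ?case by simp
    next
      case (Suc k)
      then obtain y where y: "(rt,y) \<in> adj T ^^ k" "(y,v) \<in> adj T" by (meson relpow_Suc_E)
      have "k \<le> r" using Suc.prems by simp
      then have "y \<in> ball_set T rt r" unfolding ball_set_def using y(1) by blast
      then have "y \<in> fst T'" using bs by blast
      moreover have "v \<in> ball_set T rt r" unfolding ball_set_def using Suc.prems by blast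
      then have "v \<in> fst T'" using bs by blast
      ultimately have "(y,v) \<in> adj T'" using sub_adj[OF s] y by auto
      then show ?case using Suc y by (meson Suc_leD relpow_Suc_I)
    qed
  qed
  then show "ball_set T rt r \<subseteq> ball_set T' rt r" unfolding ball_set_def by blast
qed

lemma sub_restr: "sub T' T \<Longrightarrow> X \<subseteq> fst T' \<Longrightarrow> restr T' X = restr T X"
proof -
  assume s: "sub T' T" and X: "X \<subseteq> fst T'"
  have a: "\<And>v w. snd T' v = Some w \<Longrightarrow> snd T v = Some w" using s unfolding sub_def
    by (metis option.distinct(1))
  have b: "\<And>v w. v \<in> fst T' \<Longrightarrow> w \<in> fst T' \<Longrightarrow> snd T v = Some w \<Longrightarrow> snd T' v = Some w"
    using s unfolding sub_def by blast
  have c: "fst T' \<subseteq> fst T" using s unfolding sub_def by blast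
  have 1: "X \<inter> fst T' = X \<inter> fst T" using X c by blast
  have 2: "(\<lambda>v. if v \<in> X \<and> (case snd T' v of Some w \<Rightarrow> w \<in> X | None \<Rightarrow> False) then snd T' v else None)
      = (\<lambda>v. if v \<in> X \<and> (case snd T v of Some w \<Rightarrow> w \<in> X | None \<Rightarrow> False) then snd T v else None)"
  proof
    fix v
    show "(if v \<in> X \<and> (case snd T' v of Some w \<Rightarrow> w \<in> X | None \<Rightarrow> False) then snd T' v else None)
      = (if v \<in> X \<and> (case snd T v of Some w \<Rightarrow> w \<in> X | None \<Rightarrow> False) then snd T v else None)"
    proof (cases "snd T' v")
      case None
      show ?thesis
      proof (cases "snd T v")
        case (Some w)
        then have "\<not> (v \<in> X \<and> w \<in> X)" using b X None by fastforce
        then show ?thesis using None Some by auto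
      qed (use None in simp)
    next
      case (Some w)
      then show ?thesis using a[OF Some] by simp
    qed
  qed
  show ?thesis unfolding restr_def using 1 2 by simp
qed

lemma sub_ballT: "sub T' T \<Longrightarrow> ball_set T rt r \<subseteq> fst T' \<Longrightarrow> ballT T' rt r = ballT T rt r"
  unfolding ballT_def using sub_ball sub_restr by metis

lemma ballT_restr: "wf T \<Longrightarrow> rt \<in> fst T \<Longrightarrow> ball_set T rt r \<subseteq> B \<Longrightarrow> ballT (restr T B) rt r = ballT T rt r"
  by (rule sub_ballT[OF sub_restr_wf]) (use ball_V in \<open>auto simp: restr_def\<close>)

lemma ball_restr: "wf T \<Longrightarrow> rt \<in> fst T \<Longrightarrow> ball_set T rt r \<subseteq> B \<Longrightarrow> ball_set (restr T B) rt r = ball_set T rt r"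
  by (rule sub_ball[OF sub_restr_wf]) (use ball_V in \<open>auto simp: restr_def\<close>)

lemma anc_local: "wf T \<Longrightarrow> anc T k v = Some x \<Longrightarrow> ball_set T v k \<subseteq> B \<Longrightarrow> anc (restr T B) k v = Some x"
proof (induction k arbitrary: v)
  case 0 then show ?case by simp
next
  case (Suc k)
  then obtain w where w: "snd T v = Some w" "anc T k w = Some x" by (auto split: option.splits)
  have vw: "(v,w) \<in> adj T" using wfD[OF Suc.prems(1) w(1)] w unfolding adj_def by auto
  have wb: "w \<in> ball_set T v 1" using vw unfolding ball_set_def
    by (intro CollectI exI[of _ 1]) auto
  have "ball_set T w k \<subseteq> ball_set T v (1 + k)" by (rule ball_trans[OF wb])
  then have "ball_set T w k \<subseteq> B" using Suc.prems by simp
  then have IH: "anc (restr T B) k w = Some x" using Suc.IH[OF Suc.prems(1) w(2)] by blast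
  have "v \<in> B" "w \<in> B" using Suc.prems(3) wb ball_0[of v T] ball_mono[of 1 "Suc k" T v] by auto
  then have "snd (restr T B) v = Some w" using w unfolding restr_def by simp
  then show ?case using IH by simp
qed

lemma anc_restr_iff: "wf T \<Longrightarrow> ball_set T v k \<subseteq> B \<Longrightarrow> anc (restr T B) k v = anc T k v"
proof (cases "anc T k v")
  case None
  assume "wf T"
  then show ?thesis using None sub_anc[OF sub_restr_wf] by (metis not_None_eq)
next
  case (Some a)
  assume "wf T" "ball_set T v k \<subseteq> B"
  then show ?thesis using anc_local Some by metis
qed

lemma iso_comp: "ft_iso A B f \<Longrightarrow> ft_iso B C g \<Longrightarrow> ft_iso A C (g \<circ> f)"
proof -
  assume i1: "ft_iso A B f" and i2: "ft_iso B C g"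
  have "bij_betw (g \<circ> f) (fst A) (fst C)" using i1 i2 unfolding ft_iso_def by (meson bij_betw_trans)
  moreover have "\<forall>v\<in>fst A. snd C ((g \<circ> f) v) = map_option (g \<circ> f) (snd A v)"
  proof
    fix v assume v: "v \<in> fst A"
    then have "f v \<in> fst B" using i1 unfolding ft_iso_def bij_betw_def by blast
    then show "snd C ((g \<circ> f) v) = map_option (g \<circ> f) (snd A v)"
      using i1 i2 v unfolding ft_iso_def by (simp add: option.map_comp)
  qed
  ultimately show ?thesis unfolding ft_iso_def by blast
qed

lemma iso_id: "ft_iso A A id"
  unfolding ft_iso_def by (simp add: option.map_id)

lemma iso_inv:
  assumes w: "wf A" and i: "ft_iso A B f"
  shows "ft_iso B A (the_inv_into (fst A) f)"
proof -
  let ?g = "the_inv_into (fst A) f"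
  have b: "bij_betw f (fst A) (fst B)" and p: "\<forall>v\<in>fst A. snd B (f v) = map_option f (snd A v)"
    using i unfolding ft_iso_def by auto
  have "bij_betw ?g (fst B) (fst A)" using b by (rule bij_betw_the_inv_into)
  moreover have "\<forall>v\<in>fst B. snd A (?g v) = map_option ?g (snd B v)"
  proof
    fix v assume v: "v \<in> fst B"
    then obtain u where u: "u \<in> fst A" "v = f u" using b by (auto simp: bij_betw_def)
    have gu: "?g v = u" using u b by (simp add: bij_betw_def the_inv_into_f_f)
    show "snd A (?g v) = map_option ?g (snd B v)"
    proof (cases "snd A u")
      case None then show ?thesis using gu p u by simp
    next
      case (Some w)
      then have "w \<in> fst A" using wfD[OF w] by blast
      then show ?thesis using gu p u Some b by (simp add: bij_betw_def the_inv_into_f_f)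
    qed
  qed
  ultimately show ?thesis unfolding ft_iso_def by blast
qed

lemma iso_bij: "ft_iso A B f \<Longrightarrow> bij_betw f (fst A) (fst B)"
  unfolding ft_iso_def by blast

lemma iso_snd: "ft_iso A B f \<Longrightarrow> v \<in> fst A \<Longrightarrow> snd B (f v) = map_option f (snd A v)"
  unfolding ft_iso_def by blast

lemma iso_inj: "ft_iso A B f \<Longrightarrow> u \<in> fst A \<Longrightarrow> v \<in> fst A \<Longrightarrow> f u = f v \<longleftrightarrow> u = v"
  unfolding ft_iso_def bij_betw_def inj_on_def by blast

lemma iso_in: "ft_iso A B f \<Longrightarrow> u \<in> fst A \<Longrightarrow> f u \<in> fst B"
  unfolding ft_iso_def bij_betw_def by blast

lemma iso_surj: "ft_iso A B f \<Longrightarrow> v \<in> fst B \<Longrightarrow> \<exists>u\<in>fst A. v = f u"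
  unfolding ft_iso_def bij_betw_def by blast

lemma rooted_iso_refl: "rooted_iso G G"
  unfolding rooted_iso_def using iso_id by (metis id_apply)

lemma rooted_iso_trans: "rooted_iso A B \<Longrightarrow> rooted_iso B C \<Longrightarrow> rooted_iso A C"
  unfolding rooted_iso_def using iso_comp by (metis comp_apply)

lemma rooted_iso_sym: "wf (fst A) \<Longrightarrow> snd A \<in> fst (fst A) \<Longrightarrow> rooted_iso A B \<Longrightarrow> rooted_iso B A"
proof -
  assume w: "wf (fst A)" "snd A \<in> fst (fst A)" "rooted_iso A B"
  then obtain f where f: "ft_iso (fst A) (fst B) f" "f (snd A) = snd B" unfolding rooted_iso_def by blast
  have "the_inv_into (fst (fst A)) f (snd B) = snd A"
    using f w iso_bij[OF f(1)] by (metis bij_betw_def the_inv_into_f_f)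
  then show ?thesis unfolding rooted_iso_def using iso_inv[OF w(1) f(1)] by blast
qed

lemma doubly_iso_trans: "doubly_iso A B \<Longrightarrow> doubly_iso B C \<Longrightarrow> doubly_iso A C"
  unfolding doubly_iso_def using iso_comp by (metis comp_apply)

lemma doubly_iso_refl: "doubly_iso G G"
  unfolding doubly_iso_def using iso_id by (metis id_apply)

lemma doubly_iso_sym: "wf (fst A) \<Longrightarrow> fst (snd A) \<in> fst (fst A) \<Longrightarrow> snd (snd A) \<in> fst (fst A) \<Longrightarrow>
   doubly_iso A B \<Longrightarrow> doubly_iso B A"
proof -
  assume w: "wf (fst A)" "fst (snd A) \<in> fst (fst A)" "snd (snd A) \<in> fst (fst A)" "doubly_iso A B"
  then obtain f where f: "ft_iso (fst A) (fst B) f" "f (fst (snd A)) = fst (snd B)" "f (snd (snd A)) = snd (snd B)"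
    unfolding doubly_iso_def by blast
  have "the_inv_into (fst (fst A)) f (fst (snd B)) = fst (snd A)"
    "the_inv_into (fst (fst A)) f (snd (snd B)) = snd (snd A)"
    using f w iso_bij[OF f(1)] by (metis bij_betw_def the_inv_into_f_f)+
  then show ?thesis unfolding doubly_iso_def using iso_inv[OF w(1) f(1)] by blast
qed

lemma iso_parent:
  assumes "wf A" "ft_iso A B f" "v \<in> fst A" "w \<in> fst A"
  shows "snd B (f v) = Some (f w) \<longleftrightarrow> snd A v = Some w"
proof (cases "snd A v")
  case None then show ?thesis using assms iso_snd by fastforce
next
  case (Some w')
  then have "w' \<in> fst A" using wfD assms by blast
  then show ?thesis using Some assms iso_snd iso_inj by fastforce
qed

lemma iso_adj:
  assumes "wf A" "ft_iso A B f" "u \<in> fst A" "v \<in> fst A"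
  shows "(f u, f v) \<in> adj B \<longleftrightarrow> (u,v) \<in> adj A"
  using assms iso_parent[OF assms(1,2)] iso_in[OF assms(2)] unfolding adj_def by auto

lemma iso_relpow:
  assumes w: "wf A" and i: "ft_iso A B f" and rt: "rt \<in> fst A"
  shows "{v. (f rt, v) \<in> adj B ^^ k} = f ` {v. (rt,v) \<in> adj A ^^ k}"
proof (induction k)
  case 0 then show ?case by simp
next
  case (Suc k)
  show ?case
  proof
    show "{v. (f rt, v) \<in> adj B ^^ Suc k} \<subseteq> f ` {v. (rt, v) \<in> adj A ^^ Suc k}"
    proof
      fix v assume "v \<in> {v. (f rt, v) \<in> adj B ^^ Suc k}"
      then obtain y where y: "(f rt, y) \<in> adj B ^^ k" "(y,v) \<in> adj B" by (auto elim: relpow_Suc_E)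
      then obtain y' where y': "(rt,y') \<in> adj A ^^ k" "y = f y'" using Suc by auto
      have y'V: "y' \<in> fst A" using relpow_adj_V[OF y'(1) rt] .
      obtain v' where v': "v' \<in> fst A" "v = f v'" using iso_surj[OF i] adj_V[OF y(2)] by blast
      have "(y',v') \<in> adj A" using iso_adj[OF w i y'V v'(1)] y y' v' by simp
      then show "v \<in> f ` {v. (rt, v) \<in> adj A ^^ Suc k}" using y' v' by (auto intro: relpow_Suc_I)
    qed
  next
    show "f ` {v. (rt, v) \<in> adj A ^^ Suc k} \<subseteq> {v. (f rt, v) \<in> adj B ^^ Suc k}"
    proof
      fix x assume "x \<in> f ` {v. (rt, v) \<in> adj A ^^ Suc k}"
      then obtain v where v: "x = f v" "(rt,v) \<in> adj A ^^ Suc k" by blast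
      then obtain y where y: "(rt, y) \<in> adj A ^^ k" "(y,v) \<in> adj A" by (auto elim: relpow_Suc_E)
      have "(f rt, f y) \<in> adj B ^^ k" using Suc y by auto
      moreover have "(f y, f v) \<in> adj B" using iso_adj[OF w i] adj_V[OF y(2)] y by blast
      ultimately show "x \<in> {v. (f rt, v) \<in> adj B ^^ Suc k}" using v by (auto intro: relpow_Suc_I)
    qed
  qed
qed

lemma iso_ball: "wf A \<Longrightarrow> ft_iso A B f \<Longrightarrow> rt \<in> fst A \<Longrightarrow> ball_set B (f rt) r = f ` ball_set A rt r"
proof -
  assume a: "wf A" "ft_iso A B f" "rt \<in> fst A"
  have "ball_set B (f rt) r = (\<Union>k\<in>{..r}. {v. (f rt, v) \<in> adj B ^^ k})" unfolding ball_set_def by auto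
  also have "\<dots> = (\<Union>k\<in>{..r}. f ` {v. (rt, v) \<in> adj A ^^ k})" using iso_relpow[OF a] by simp
  also have "\<dots> = f ` ball_set A rt r" unfolding ball_set_def by auto
  finally show ?thesis .
qed

lemma iso_restr:
  assumes w: "wf A" and i: "ft_iso A B f" and X: "X \<subseteq> fst A"
  shows "ft_iso (restr A X) (restr B (f ` X)) f"
proof -
  have b: "bij_betw f (fst A) (fst B)" using i by (rule iso_bij)
  have fX: "f ` X \<subseteq> fst B" using X b by (auto simp: bij_betw_def)
  have "bij_betw f X (f ` X)" using X b by (meson bij_betw_subset)
  then have "bij_betw f (X \<inter> fst A) (f ` X \<inter> fst B)" using X fX by (simp add: Int_absorb2)
  moreover have "\<forall>v\<in>X \<inter> fst A. snd (restr B (f ` X)) (f v) = map_option f (snd (restr A X) v)"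
  proof
    fix v assume v: "v \<in> X \<inter> fst A"
    have fv: "f v \<in> f ` X" using v by blast
    show "snd (restr B (f ` X)) (f v) = map_option f (snd (restr A X) v)"
    proof (cases "snd A v")
      case None then show ?thesis using iso_snd[OF i] v unfolding restr_def by simp
    next
      case (Some w')
      then have w'A: "w' \<in> fst A" using wfD[OF w] by blast
      have "f w' \<in> f ` X \<longleftrightarrow> w' \<in> X" using iso_inj[OF i] X w'A by blast
      then show ?thesis using iso_snd[OF i] v Some fv unfolding restr_def by simp
    qed
  qed
  ultimately show ?thesis unfolding ft_iso_def restr_def by simp
qed

lemma iso_ballT: "wf A \<Longrightarrow> ft_iso A B f \<Longrightarrow> rt \<in> fst A \<Longrightarrow> ft_iso (ballT A rt r) (ballT B (f rt) r) f"
  unfolding ballT_def using iso_restr iso_ball ball_V by metis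

lemma iso_anc: "wf A \<Longrightarrow> ft_iso A B f \<Longrightarrow> v \<in> fst A \<Longrightarrow> anc B k (f v) = map_option f (anc A k v)"
proof (induction k arbitrary: v)
  case 0 then show ?case by simp
next
  case (Suc k)
  show ?case
  proof (cases "snd A v")
    case None then show ?thesis using iso_snd[OF Suc.prems(2,3)] by simp
  next
    case (Some w)
    then have "w \<in> fst A" using wfD[OF Suc.prems(1)] by blast
    then show ?thesis using iso_snd[OF Suc.prems(2,3)] Some Suc by simp
  qed
qed

lemma desc_iff: "v \<in> descendants T a \<longleftrightarrow> (\<exists>k. anc T k v = Some a)"
  unfolding descendants_def using anc_rtrancl[of T _ v a] rtrancl_anc[of v a T]
  unfolding prel_def by auto

lemma desc_V: "wf T \<Longrightarrow> a \<in> fst T \<Longrightarrow> descendants T a \<subseteq> fst T"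
proof
  fix v assume w: "wf T" "a \<in> fst T" "v \<in> descendants T a"
  then obtain k where k: "anc T k v = Some a" using desc_iff by blast
  show "v \<in> fst T"
  proof (cases k)
    case 0 then show ?thesis using k w by simp
  next
    case (Suc k') then show ?thesis using k wfD[OF w(1)] by (auto split: option.splits)
  qed
qed

lemma desc_self: "a \<in> descendants T a"
  unfolding descendants_def by simp

lemma iso_desc:
  assumes w: "wf A" and wB: "wf B" and i: "ft_iso A B f" and a: "a \<in> fst A"
  shows "descendants B (f a) = f ` descendants A a"
proof
  show "f ` descendants A a \<subseteq> descendants B (f a)"
  proof
    fix x assume "x \<in> f ` descendants A a"
    then obtain v k where v: "x = f v" "anc A k v = Some a" "v \<in> fst A"
      using desc_iff desc_V[OF w a] by blast
    then show "x \<in> descendants B (f a)" using iso_anc[OF w i v(3)] desc_iff by auto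
  qed
next
  show "descendants B (f a) \<subseteq> f ` descendants A a"
  proof
    fix x assume x: "x \<in> descendants B (f a)"
    then have "x \<in> fst B" using desc_V[OF wB iso_in[OF i a]] by blast
    then obtain v where v: "v \<in> fst A" "x = f v" using iso_surj[OF i] by blast
    obtain k where k: "anc B k x = Some (f a)" using x desc_iff by blast
    then have "map_option f (anc A k v) = Some (f a)" using iso_anc[OF w i v(1)] v by simp
    then obtain a' where a': "anc A k v = Some a'" "f a' = f a" by auto
    have "a' \<in> fst A" using anc_in_V[OF w v(1) a'(1)] .
    then have "a' = a" using iso_inj[OF i _ a] a' by blast
    then show "x \<in> f ` descendants A a" using a' v desc_iff by blast
  qed
qed

lemma iso_desc_tree:
  assumes w: "wf A" and wB: "wf B" and i: "ft_iso A B f" and a: "a \<in> fst A"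
  shows "ft_iso (fst (desc_tree (A,a))) (fst (desc_tree (B, f a))) f"
proof -
  have D: "descendants B (f a) = f ` descendants A a" by (rule iso_desc[OF w wB i a])
  have DV: "descendants A a \<subseteq> fst A" by (rule desc_V[OF w a])
  have "bij_betw f (descendants A a) (descendants B (f a))"
    using D DV iso_bij[OF i] by (metis bij_betw_subset)
  moreover have "\<forall>v\<in>descendants A a. snd (fst (desc_tree (B, f a))) (f v) = map_option f (snd (fst (desc_tree (A,a))) v)"
  proof
    fix v assume v: "v \<in> descendants A a"
    have vA: "v \<in> fst A" using v DV by blast
    have "f v \<noteq> f a \<longleftrightarrow> v \<noteq> a" using iso_inj[OF i vA a] by blast
    moreover have "f v \<in> descendants B (f a)" using v D by blast
    ultimately show "snd (fst (desc_tree (B, f a))) (f v) = map_option f (snd (fst (desc_tree (A,a))) v)"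
      using v iso_snd[OF i vA] unfolding desc_tree_def by auto
  qed
  moreover have "fst (fst (desc_tree (A,a))) = descendants A a" "fst (fst (desc_tree (B,f a))) = descendants B (f a)"
    by (simp_all add: desc_tree_def)
  ultimately show ?thesis unfolding ft_iso_def by simp
qed

lemma wf_desc: "wf T \<Longrightarrow> a \<in> fst T \<Longrightarrow> wf (fst (desc_tree (T,a)))"
proof -
  assume w: "wf T" "a \<in> fst T"
  show ?thesis unfolding wf_def desc_tree_def
  proof (intro allI impI, simp only: fst_conv snd_conv)
    fix v assume h: "(if v \<in> descendants T a \<and> v \<noteq> a then snd T v else None) \<noteq> None"
    then have v: "v \<in> descendants T a" "v \<noteq> a" "snd T v \<noteq> None" by (auto split: if_splits)
    then obtain y where y: "snd T v = Some y" by blast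
    have "(v,a) \<in> (prel T)\<^sup>*" using v(1) unfolding descendants_def prel_def by simp
    then obtain z where z: "(v,z) \<in> prel T" "(z,a) \<in> (prel T)\<^sup>*" using v(2)
      by (meson converse_rtranclE)
    then have "z = y" using y z(1) unfolding prel_def by auto
    then have "y \<in> descendants T a" using z unfolding descendants_def prel_def by simp
    then show "v \<in> descendants T a \<and> the (if v \<in> descendants T a \<and> v \<noteq> a then snd T v else None) \<in> descendants T a"
      using v y by simp
  qed
qed



abbreviation DT :: "ftree \<Rightarrow> nat \<Rightarrow> ftree" where
  "DT T a \<equiv> fst (desc_tree (T,a))"

lemma DT_fst: "fst (DT T a) = descendants T a"
  by (simp add: desc_tree_def)

lemma DT_snd: "snd (DT T a) v = (if v \<in> descendants T a \<and> v \<noteq> a then snd T v else None)"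
  unfolding desc_tree_def by (simp only: fst_conv snd_conv)

lemma desc_tree_eq: "desc_tree (T,a) = (DT T a, a)"
  by (simp add: desc_tree_def)

lemma desc_tree_ext: "DT T a = X \<Longrightarrow> desc_tree (T,a) = (X, a)"
  by (metis desc_tree_eq)

lemma DT_eq': "DT X a = (descendants X a, \<lambda>v. if v \<in> descendants X a \<and> v \<noteq> a then snd X v else None)"
  unfolding desc_tree_def by (simp only: fst_conv snd_conv)

lemma prel_iff: "(v,w) \<in> prel T \<longleftrightarrow> snd T v = Some w"
  unfolding prel_def by simp

lemma desc_rtrancl: "v \<in> descendants T a \<longleftrightarrow> (v,a) \<in> (prel T)\<^sup>*"
  unfolding descendants_def prel_def by simp

lemma desc_step: "v \<in> descendants T a \<Longrightarrow> v \<noteq> a \<Longrightarrow> snd T v = Some w \<Longrightarrow> w \<in> descendants T a"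
proof -
  assume a: "v \<in> descendants T a" "v \<noteq> a" "snd T v = Some w"
  then have "(v,a) \<in> (prel T)\<^sup>*" using desc_rtrancl by blast
  then obtain z where z: "(v,z) \<in> prel T" "(z,a) \<in> (prel T)\<^sup>*" using a(2) by (meson converse_rtranclE)
  then have "z = w" using a(3) prel_iff by (metis option.inject)
  then show ?thesis using z desc_rtrancl by blast
qed

lemma desc_child: "w \<in> descendants T a \<Longrightarrow> snd T v = Some w \<Longrightarrow> v \<in> descendants T a"
  using desc_rtrancl prel_iff by (meson converse_rtrancl_into_rtrancl)

lemma desc_trans: "v \<in> descendants T a \<Longrightarrow> a \<in> descendants T b \<Longrightarrow> v \<in> descendants T b"
  using desc_rtrancl by (meson rtrancl_trans)

lemma desc_antisym: "family_tree T \<Longrightarrow> v \<in> descendants T a \<Longrightarrow> a \<in> descendants T v \<Longrightarrow> v = a"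
  using desc_rtrancl antisym_prel by blast

lemma sub_desc:
  assumes ft: "family_tree T" and aV: "a \<in> fst T"
  shows "sub (DT T a) T"
  unfolding sub_def
proof (intro conjI allI impI ballI)
  show "fst (DT T a) \<subseteq> fst T" using desc_V[OF ft_wf[OF ft] aV] DT_fst by simp
next
  fix v assume "snd (DT T a) v \<noteq> None"
  then show "snd (DT T a) v = snd T v" using DT_snd by (simp split: if_splits)
next
  fix v w assume v: "v \<in> fst (DT T a)" "w \<in> fst (DT T a)" "snd T v = Some w"
  have "v \<noteq> a"
  proof
    assume "v = a"
    then have "(a,w) \<in> prel T" "(w,a) \<in> (prel T)\<^sup>*" using v prel_iff DT_fst desc_rtrancl by auto
    then have "(a,a) \<in> (prel T)\<^sup>+" by auto
    then show False using acyc[OF ft] by blast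
  qed
  then show "snd (DT T a) v = Some w" using v DT_snd DT_fst by simp
qed

lemma anc_DT:
  assumes ft: "family_tree T" and k: "anc T k u = Some x" and x: "x \<in> descendants T b"
  shows "anc (DT T b) k u = Some x"
  using k
proof (induction k arbitrary: u)
  case 0 then show ?case by simp
next
  case (Suc k)
  then obtain w where w: "snd T u = Some w" "anc T k w = Some x" by (auto split: option.splits)
  have ux: "(u,x) \<in> (prel T)\<^sup>+"
  proof -
    have "(u,w) \<in> prel T" using w prel_iff by blast
    moreover have "(w,x) \<in> (prel T)\<^sup>*" using anc_rtrancl[OF w(2)] .
    ultimately show ?thesis by auto
  qed
  have xb: "(x,b) \<in> (prel T)\<^sup>*" using x desc_rtrancl by blast
  have ub: "u \<in> descendants T b" using ux xb desc_rtrancl by (meson rtrancl_trans trancl_into_rtrancl)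
  have "u \<noteq> b"
  proof
    assume "u = b"
    then have "(b,b) \<in> (prel T)\<^sup>+" using ux xb by (meson rtrancl_into_trancl2 trancl_rtrancl_trancl)
    then show False using acyc[OF ft] by blast
  qed
  then have "snd (DT T b) u = Some w" using DT_snd ub w by simp
  then show ?case using Suc.IH[OF w(2)] by simp
qed

lemma anc_DT_iff:
  assumes ft: "family_tree T" and aV: "b \<in> fst T" and x: "x \<in> descendants T b"
  shows "anc (DT T b) k u = Some x \<longleftrightarrow> anc T k u = Some x"
  using anc_DT[OF ft _ x] sub_anc[OF sub_desc[OF ft aV]] by blast

lemma DT_DT:
  assumes ft: "family_tree T" and a: "a \<in> descendants T b"
  shows "desc_tree (DT T b, a) = desc_tree (T, a)"
proof -
  have D: "descendants (DT T b) a = descendants T a"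
  proof
    show "descendants (DT T b) a \<subseteq> descendants T a"
    proof
      fix v assume "v \<in> descendants (DT T b) a"
      then obtain k where "anc (DT T b) k v = Some a" using desc_iff by blast
      moreover have "\<And>k v x. anc (DT T b) k v = Some x \<Longrightarrow> anc T k v = Some x"
      proof -
        fix k v x assume "anc (DT T b) k v = Some x"
        then show "anc T k v = Some x"
        proof (induction k arbitrary: v)
          case 0 then show ?case by simp
        next
          case (Suc k)
          then obtain w where "snd (DT T b) v = Some w" "anc (DT T b) k w = Some x"
            by (auto split: option.splits)
          then show ?case using Suc.IH DT_snd[of T b v] by (simp split: if_splits)
        qed
      qed
      ultimately show "v \<in> descendants T a" using desc_iff by blast
    qed
  next
    show "descendants T a \<subseteq> descendants (DT T b) a"
      using anc_DT[OF ft _ a] desc_iff by blast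
  qed
  have M: "\<And>v. (if v \<in> descendants T a \<and> v \<noteq> a then snd (DT T b) v else None)
      = (if v \<in> descendants T a \<and> v \<noteq> a then snd T v else None)"
  proof -
    fix v
    show "(if v \<in> descendants T a \<and> v \<noteq> a then snd (DT T b) v else None)
      = (if v \<in> descendants T a \<and> v \<noteq> a then snd T v else None)"
    proof (cases "v \<in> descendants T a \<and> v \<noteq> a")
      case True
      then have vb: "v \<in> descendants T b" using desc_trans a by blast
      have "v \<noteq> b"
      proof
        assume "v = b"
        then have "a = v" using desc_antisym[OF ft] a True by blast
        then show False using True by blast
      qed
      then show ?thesis using True vb DT_snd by simp
    next
      case False then show ?thesis by auto
    qed
  qed
  have "DT (DT T b) a = (descendants T a, \<lambda>v. if v \<in> descendants T a \<and> v \<noteq> a then snd (DT T b) v else None)"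
    by (subst DT_eq'[of "DT T b"]) (simp only: D)
  also have "\<dots> = (descendants T a, \<lambda>v. if v \<in> descendants T a \<and> v \<noteq> a then snd T v else None)"
    using M by presburger
  also have "\<dots> = DT T a" by (rule DT_eq'[symmetric])
  finally have "DT (DT T b) a = DT T a" .
  then show ?thesis using desc_tree_ext desc_tree_eq by metis
qed

lemma top_desc_tree:
  assumes ft: "family_tree T" and aV: "a \<in> fst T" and top: "snd T a = None"
  shows "desc_tree (T,a) = (T,a)"
proof -
  have wfT: "wf T" using ft_wf[OF ft] .
  have "fst T \<subseteq> descendants T a"
  proof
    fix v assume vV: "v \<in> fst T"
    have "(a,v) \<in> (adj T)\<^sup>*" using ft_conn[OF ft aV vV] .
    then show "v \<in> descendants T a"
    proof (induction rule: rtrancl_induct)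
      case base then show ?case by (rule desc_self)
    next
      case (step y z)
      then show ?case
      proof (cases "snd T y = Some z")
        case True
        have "y \<noteq> a" using True top by auto
        then show ?thesis using desc_step step True by blast
      next
        case False
        then have "snd T z = Some y" using step(2) unfolding adj_def by auto
        then show ?thesis using desc_child step by blast
      qed
    qed
  qed
  then have D: "descendants T a = fst T" using desc_V[OF wfT aV] by blast
  have M: "(\<lambda>v. if v \<in> descendants T a \<and> v \<noteq> a then snd T v else None) = snd T"
  proof
    fix v
    show "(if v \<in> descendants T a \<and> v \<noteq> a then snd T v else None) = snd T v"
    proof (cases "v \<in> fst T")
      case False
      then have "snd T v = None" using wfD[OF wfT] by (metis not_None_eq)
      then show ?thesis by simp
    qed (use D top in auto)
  qed
  have "DT T a = (descendants T a, snd T)" by (subst DT_eq') (subst M, rule refl)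
  then have "DT T a = T" using D by simp
  then show ?thesis by (rule desc_tree_ext)
qed

lemma adj_rtrancl_sym: "(u,v) \<in> (adj T)\<^sup>* \<Longrightarrow> (v,u) \<in> (adj T)\<^sup>*"
proof (induction rule: rtrancl_induct)
  case base then show ?case by simp
next
  case (step y z)
  then show ?case using adj_sym by (meson converse_rtrancl_into_rtrancl)
qed

lemma ft_DT:
  assumes ft: "family_tree T" and aV: "a \<in> fst T"
  shows "family_tree (DT T a)"
proof -
  have wfT: "wf T" using ft_wf[OF ft] .
  have s: "sub (DT T a) T" using sub_desc[OF ft aV] .
  have sm: "\<And>v w. snd (DT T a) v = Some w \<Longrightarrow> snd T v = Some w"
    using DT_snd by (simp split: if_splits)
  have c1: "\<forall>v. snd (DT T a) v \<noteq> None \<longrightarrow> v \<in> fst (DT T a) \<and> the (snd (DT T a) v) \<in> fst (DT T a)"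
    using wf_desc[OF wfT aV] unfolding wf_def by blast
  have c2: "\<forall>v. snd (DT T a) v \<noteq> Some v" using sm ft_noloop[OF ft] by blast
  have c3: "\<forall>u v. \<not> (snd (DT T a) u = Some v \<and> snd (DT T a) v = Some u)" using sm ft_no2[OF ft] by blast
  have c4: "\<forall>u\<in>fst (DT T a). finite {w. snd (DT T a) w = Some u}"
  proof
    fix u assume "u \<in> fst (DT T a)"
    then have "u \<in> fst T" using s unfolding sub_def by blast
    then have "finite {w. snd T w = Some u}" using ft_locfin[OF ft] by blast
    then show "finite {w. snd (DT T a) w = Some u}" by (rule rev_finite_subset) (use sm in blast)
  qed
  have toa: "\<And>v. v \<in> fst (DT T a) \<Longrightarrow> (v,a) \<in> (adj (DT T a))\<^sup>*"
  proof -
    fix v assume "v \<in> fst (DT T a)"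
    then have "(v,a) \<in> (prel T)\<^sup>*" using DT_fst desc_rtrancl by simp
    then show "(v,a) \<in> (adj (DT T a))\<^sup>*"
    proof (induction rule: converse_rtrancl_induct)
      case base then show ?case by simp
    next
      case (step y z)
      show ?case
      proof (cases "y = a")
        case True then show ?thesis by simp
      next
        case False
        have yD: "y \<in> descendants T a" using step(1,2) desc_rtrancl
          by (meson converse_rtrancl_into_rtrancl)
        have zD: "z \<in> descendants T a" using step(2) desc_rtrancl by blast
        have "snd (DT T a) y = Some z" using DT_snd False yD step(1) prel_iff by simp
        then have "(y,z) \<in> adj (DT T a)" using yD zD DT_fst unfolding adj_def by simp
        then show ?thesis using step(3) by (meson converse_rtrancl_into_rtrancl)
      qed
    qed
  qed
  have c5: "\<forall>u\<in>fst (DT T a). \<forall>v\<in>fst (DT T a). (u,v) \<in> (adj (DT T a))\<^sup>*"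
    using toa adj_rtrancl_sym by (meson rtrancl_trans)
  have c6: "\<not> (\<exists>cs. 3 \<le> length cs \<and> distinct cs \<and> set cs \<subseteq> fst (DT T a) \<and>
           (\<forall>i<length cs. (cs!i, cs!((i+1) mod length cs)) \<in> adj (DT T a)))"
  proof
    assume "\<exists>cs. 3 \<le> length cs \<and> distinct cs \<and> set cs \<subseteq> fst (DT T a) \<and>
           (\<forall>i<length cs. (cs!i, cs!((i+1) mod length cs)) \<in> adj (DT T a))"
    then obtain cs where cs: "3 \<le> length cs" "distinct cs" "set cs \<subseteq> fst (DT T a)"
      "\<forall>i<length cs. (cs!i, cs!((i+1) mod length cs)) \<in> adj (DT T a)" by blast
    have "set cs \<subseteq> fst T" using cs(3) s unfolding sub_def by blast
    moreover have "\<forall>i<length cs. (cs!i, cs!((i+1) mod length cs)) \<in> adj T"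
      using cs(4) sub_adj_sub[OF s] by blast
    ultimately show False using ft_nocyc[OF ft cs(1,2)] by blast
  qed
  show ?thesis unfolding family_tree_def using c1 c2 c3 c4 c5 c6 by blast
qed

lemma desc_tree_RFT: "G \<in> RFT \<Longrightarrow> desc_tree G \<in> RFT"
proof -
  assume "G \<in> RFT"
  then obtain T a where G: "G = (T,a)" "family_tree T" "a \<in> fst T" unfolding RFT_def by auto
  have "desc_tree G = (DT T a, a)" using G(1) desc_tree_eq by metis
  then show ?thesis unfolding RFT_def using ft_DT[OF G(2,3)] desc_self[of a T] DT_fst
    by simp
qed

lemma case1_ball:
  assumes ft: "family_tree T" and uV: "u \<in> fst T" and anc: "anc T r u = Some b"
  shows "ballT (DT T b) u r = ballT T u r"
proof -
  have wfT: "wf T" using ft_wf[OF ft] .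
  have bV: "b \<in> fst T" using anc_in_V[OF wfT uV anc] .
  have inv: "\<And>i x. i \<le> r \<Longrightarrow> (u,x) \<in> adj T ^^ i \<Longrightarrow> \<exists>k. r - i \<le> k \<and> anc T k x = Some b"
  proof -
    fix i x assume "i \<le> r" "(u,x) \<in> adj T ^^ i"
    then show "\<exists>k. r - i \<le> k \<and> anc T k x = Some b"
    proof (induction i arbitrary: x)
      case 0 then show ?case using anc by auto
    next
      case (Suc i)
      then obtain y where y: "(u,y) \<in> adj T ^^ i" "(y,x) \<in> adj T" by (meson relpow_Suc_E)
      then obtain k where k: "r - i \<le> k" "anc T k y = Some b" using Suc by auto
      have k1: "1 \<le> k" using k Suc.prems by linarith
      show ?case
      proof (cases "snd T y = Some x")
        case True
        obtain k' where "k = Suc k'" using k1 by (cases k) auto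
        then have "anc T k' x = Some b" using k True by simp
        then show ?thesis using k \<open>k = Suc k'\<close> by (intro exI[of _ k']) auto
      next
        case False
        then have "snd T x = Some y" using y(2) unfolding adj_def by auto
        then have "anc T (Suc k) x = Some b" using k by simp
        then show ?thesis using k by (intro exI[of _ "Suc k"]) auto
      qed
    qed
  qed
  have "ball_set T u r \<subseteq> fst (DT T b)"
  proof
    fix x assume "x \<in> ball_set T u r"
    then obtain i where "i \<le> r" "(u,x) \<in> adj T ^^ i" unfolding ball_set_def by blast
    then obtain k where "anc T k x = Some b" using inv by blast
    then show "x \<in> fst (DT T b)" using DT_fst desc_iff by blast
  qed
  then show ?thesis using sub_ballT[OF sub_desc[OF ft bV]] by blast
qed

lemma sub_desc_mono:
  assumes w': "wf T'" and s: "sub T' T" and a: "a \<in> fst T'"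
  shows "sub (DT T' a) (DT T a)"
  unfolding sub_def
proof (intro conjI allI impI ballI)
  show "fst (DT T' a) \<subseteq> fst (DT T a)"
    using DT_fst desc_iff sub_anc[OF s] by (metis subsetI)
next
  fix v assume h: "snd (DT T' a) v \<noteq> None"
  then have v: "v \<in> descendants T' a" "v \<noteq> a" "snd T' v \<noteq> None" using DT_snd by (auto split: if_splits)
  then have "v \<in> descendants T a" using desc_iff sub_anc[OF s] by metis
  moreover have "snd T' v = snd T v" using s v unfolding sub_def by blast
  ultimately show "snd (DT T' a) v = snd (DT T a) v" using v DT_snd by simp
next
  fix v w assume v: "v \<in> fst (DT T' a)" "w \<in> fst (DT T' a)" "snd (DT T a) v = Some w"
  then have vv: "v \<noteq> a" "snd T v = Some w" using DT_snd by (auto split: if_splits)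
  have "v \<in> fst T'" "w \<in> fst T'" using v desc_V[OF w' a] DT_fst by auto
  then have "snd T' v = Some w" using s vv unfolding sub_def by blast
  then show "snd (DT T' a) v = Some w" using v(1) vv DT_fst DT_snd by simp
qed

lemma DL:
  assumes ft: "family_tree T" and uV: "u \<in> fst T" and anc: "anc T j u = Some a"
    and B: "ball_set T u (2*r + j) \<subseteq> B"
  shows "ballT (DT (restr T B) a) u r = ballT (DT T a) u r"
proof -
  have wfT: "wf T" using ft_wf[OF ft] .
  have aV: "a \<in> fst T" using anc_in_V[OF wfT uV anc] .
  let ?D = "DT T a"
  have sD: "sub ?D T" using sub_desc[OF ft aV] .
  have aB: "a \<in> ball_set T u (2*r+j)" using anc_ball[OF wfT anc] by simp
  have aTB: "a \<in> fst (restr T B)" using aB B aV unfolding restr_def by auto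
  have s2: "sub (DT (restr T B) a) ?D"
    using sub_desc_mono[OF wf_restr[OF wfT] sub_restr_wf[OF wfT] aTB] .
  have ancD: "anc ?D j u = Some a" using anc_DT[OF ft anc desc_self] .
  have inv: "\<And>i x. i \<le> r \<Longrightarrow> (u,x) \<in> adj ?D ^^ i \<Longrightarrow> (\<exists>k\<le>j+i. anc ?D k x = Some a) \<and> x \<in> ball_set T u i"
  proof -
    fix i x assume "i \<le> r" "(u,x) \<in> adj ?D ^^ i"
    then show "(\<exists>k\<le>j+i. anc ?D k x = Some a) \<and> x \<in> ball_set T u i"
    proof (induction i arbitrary: x)
      case 0 then show ?case using ancD ball_0 by auto
    next
      case (Suc i)
      then obtain y where y: "(u,y) \<in> adj ?D ^^ i" "(y,x) \<in> adj ?D" by (meson relpow_Suc_E)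
      then obtain k where k: "k \<le> j + i" "anc ?D k y = Some a" and yb: "y \<in> ball_set T u i"
        using Suc by auto
      have xb: "x \<in> ball_set T u (Suc i)" using ball_adj[OF yb] y(2) sub_adj_sub[OF sD] by blast
      show ?case
      proof (cases "snd ?D y = Some x")
        case True
        have "k \<noteq> 0"
        proof
          assume "k = 0"
          then have "y = a" using k by simp
          then show False using True DT_snd by simp
        qed
        then obtain k' where "k = Suc k'" by (cases k) auto
        then have ak: "anc ?D k' x = Some a" using k True by simp
        have "k' \<le> j + Suc i" using k \<open>k = Suc k'\<close> by simp
        then show ?thesis using ak xb by blast
      next
        case False
        then have "snd ?D x = Some y" using y(2) unfolding adj_def by auto
        then have "anc ?D (Suc k) x = Some a" using k by simp
        then show ?thesis using k xb by (intro conjI exI[of _ "Suc k"]) auto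
      qed
    qed
  qed
  have "ball_set ?D u r \<subseteq> fst (DT (restr T B) a)"
  proof
    fix x assume "x \<in> ball_set ?D u r"
    then obtain i where i: "i \<le> r" "(u,x) \<in> adj ?D ^^ i" unfolding ball_set_def by blast
    then obtain k where k: "k \<le> j + i" "anc ?D k x = Some a" and xb: "x \<in> ball_set T u i"
      using inv by blast
    have kT: "anc T k x = Some a" using sub_anc[OF sD k(2)] .
    have "ball_set T x k \<subseteq> ball_set T u (i + k)" using ball_trans[OF xb] .
    also have "\<dots> \<subseteq> ball_set T u (2*r+j)" using ball_mono k i by simp
    finally have "ball_set T x k \<subseteq> B" using B by blast
    then have "anc (restr T B) k x = Some a" using anc_local[OF wfT kT] by blast
    then show "x \<in> fst (DT (restr T B) a)" using DT_fst desc_iff by blast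
  qed
  then show ?thesis using sub_ballT[OF s2] by blast
qed



definition rball :: "ftree \<times> nat \<Rightarrow> nat \<Rightarrow> ftree \<times> nat" where
  "rball G r = (ballT (fst G) (snd G) r, snd G)"

definition gen :: "nat \<Rightarrow> ftree \<times> nat \<Rightarrow> (ftree \<times> nat) set" where
  "gen r K = {G \<in> RFT. rooted_iso (rball G r) K}"

definition dball :: "ftree \<times> nat \<times> nat \<Rightarrow> nat \<Rightarrow> ftree \<times> nat \<times> nat" where
  "dball x r = (ballT (fst x) (fst (snd x)) r, fst (snd x), snd (snd x))"

definition gend :: "nat \<Rightarrow> ftree \<times> nat \<times> nat \<Rightarrow> (ftree \<times> nat \<times> nat) set" where
  "gend r K = {x \<in> DRFT. snd (snd x) \<in> ball_set (fst x) (fst (snd x)) r \<and> doubly_iso (dball x r) K}"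

lemma gens_eq: "{{G \<in> RFT. rooted_iso (restr (fst G) (ball_set (fst G) (snd G) r), snd G) H} | r H. True}
   = {gen r K | r K. True}"
  unfolding gen_def rball_def ballT_def by blast

lemma gensd_eq: "{{(T,rt,v) \<in> DRFT. v \<in> ball_set T rt r \<and>
          doubly_iso (restr T (ball_set T rt r), rt, v) H} | r H. True}
   = {gend r K | r K. True}"
proof -
  have "\<And>r H. {(T,rt,v) \<in> DRFT. v \<in> ball_set T rt r \<and> doubly_iso (restr T (ball_set T rt r), rt, v) H}
     = gend r H"
    unfolding gend_def dball_def ballT_def by auto
  then show ?thesis by simp
qed

lemma gens_Pow: "{gen r K | r K. True} \<subseteq> Pow RFT"
  unfolding gen_def by blast

lemma gensd_Pow: "{gend r K | r K. True} \<subseteq> Pow DRFT"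
  unfolding gend_def by blast

lemma rooted_space_alt: "rooted_space = sigma RFT {gen r K | r K. True}"
  unfolding rooted_space_def gens_eq ..

lemma doubly_space_alt: "doubly_space = sigma DRFT {gend r K | r K. True}"
  unfolding doubly_space_def gensd_eq ..

lemma space_rooted: "space rooted_space = RFT"
  unfolding rooted_space_alt using gens_Pow by simp

lemma sets_rooted: "sets rooted_space = sigma_sets RFT {gen r K | r K. True}"
  unfolding rooted_space_alt using gens_Pow by simp

lemma space_doubly: "space doubly_space = DRFT"
  unfolding doubly_space_alt using gensd_Pow by simp

lemma sets_doubly: "sets doubly_space = sigma_sets DRFT {gend r K | r K. True}"
  unfolding doubly_space_alt using gensd_Pow by simp

lemma gen_sets: "gen r K \<in> sets rooted_space"
  unfolding sets_rooted by (rule sigma_sets.Basic) blast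

lemma gend_sets: "gend r K \<in> sets doubly_space"
  unfolding sets_doubly by (rule sigma_sets.Basic) blast

lemma nbrs_finite:
  assumes ft: "family_tree T" and vV: "v \<in> fst T"
  shows "finite {w. (v,w) \<in> adj T}"
proof -
  have "{w. (v,w) \<in> adj T} \<subseteq> set_option (snd T v) \<union> {w. snd T w = Some v}"
    unfolding adj_def by auto
  moreover have "finite (set_option (snd T v) \<union> {w. snd T w = Some v})"
    using ft_locfin[OF ft vV] by simp
  ultimately show ?thesis by (rule finite_subset)
qed

lemma ball_finite:
  assumes ft: "family_tree T" and rV: "rt \<in> fst T"
  shows "finite (ball_set T rt r)"
proof (induction r)
  case 0
  have "ball_set T rt 0 = {rt}" unfolding ball_set_def by auto
  then show ?case by simp
next
  case (Suc r)
  have "ball_set T rt (Suc r) \<subseteq> ball_set T rt r \<union> (\<Union>v\<in>ball_set T rt r. {w. (v,w) \<in> adj T})"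
  proof
    fix x assume "x \<in> ball_set T rt (Suc r)"
    then obtain k where k: "k \<le> Suc r" "(rt,x) \<in> adj T ^^ k" unfolding ball_set_def by blast
    show "x \<in> ball_set T rt r \<union> (\<Union>v\<in>ball_set T rt r. {w. (v,w) \<in> adj T})"
    proof (cases "k \<le> r")
      case True then show ?thesis using k unfolding ball_set_def by blast
    next
      case False
      then have "k = Suc r" using k by simp
      then obtain y where "(rt,y) \<in> adj T ^^ r" "(y,x) \<in> adj T" using k by (meson relpow_Suc_E)
      then show ?thesis unfolding ball_set_def by blast
    qed
  qed
  moreover have "finite (ball_set T rt r \<union> (\<Union>v\<in>ball_set T rt r. {w. (v,w) \<in> adj T}))"
    using Suc nbrs_finite[OF ft] ball_V[OF rV] by blast
  ultimately show ?case by (rule finite_subset)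
qed

definition enc :: "nat set \<times> (nat \<times> nat) set \<times> nat \<Rightarrow> ftree \<times> nat" where
  "enc x = ((fst x, \<lambda>v. if \<exists>w. (v,w) \<in> fst (snd x) then Some (SOME w. (v,w) \<in> fst (snd x)) else None),
            snd (snd x))"

definition encd :: "nat set \<times> (nat \<times> nat) set \<times> nat \<times> nat \<Rightarrow> ftree \<times> nat \<times> nat" where
  "encd x = ((fst x, \<lambda>v. if \<exists>w. (v,w) \<in> fst (snd x) then Some (SOME w. (v,w) \<in> fst (snd x)) else None),
            snd (snd x))"

lemma restr_enc:
  "restr T X = (X \<inter> fst T, \<lambda>v. if \<exists>w. (v,w) \<in> {(v,w). v \<in> X \<and> w \<in> X \<and> snd T v = Some w}
      then Some (SOME w. (v,w) \<in> {(v,w). v \<in> X \<and> w \<in> X \<and> snd T v = Some w}) else None)"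
proof -
  have "\<And>x y. x \<in> X \<Longrightarrow> y \<in> X \<Longrightarrow> snd T x = Some y \<Longrightarrow>
     (SOME w. (x,w) \<in> {(v,w). v \<in> X \<and> w \<in> X \<and> snd T v = Some w}) = y"
    by (rule some_equality) auto
  then show ?thesis unfolding restr_def by (auto simp: fun_eq_iff split: option.splits)
qed

lemma countable_balls: "countable {rball G s | G. G \<in> RFT}"
proof -
  let ?S = "{A::nat set. finite A} \<times> {E::(nat\<times>nat) set. finite E} \<times> (UNIV::nat set)"
  have c1: "countable {A::nat set. finite A}" by (rule countable_Collect_finite)
  have c2: "countable {A::(nat\<times>nat) set. finite A}" by (rule countable_Collect_finite)
  have "countable ?S" using c1 c2 by (intro countable_SIGMA) auto
  moreover have "{rball G s | G. G \<in> RFT} \<subseteq> enc ` ?S"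
  proof
    fix x assume "x \<in> {rball G s | G. G \<in> RFT}"
    then obtain T rt where G: "x = rball (T,rt) s" "family_tree T" "rt \<in> fst T"
      unfolding RFT_def by auto
    let ?X = "ball_set T rt s"
    let ?E = "{(v,w). v \<in> ?X \<and> w \<in> ?X \<and> snd T v = Some w}"
    have fX: "finite ?X" using ball_finite[OF G(2,3)] .
    have "finite ?E" by (rule finite_subset[of _ "?X \<times> ?X"]) (use fX in auto)
    moreover have "x = enc (?X \<inter> fst T, ?E, rt)"
      unfolding G(1) rball_def ballT_def enc_def by (simp only: fst_conv snd_conv restr_enc[of T ?X])
    ultimately show "x \<in> enc ` ?S" using fX by blast
  qed
  ultimately show ?thesis by (meson countable_image countable_subset)
qed

lemma countable_dballs: "countable {dball x s | x. x \<in> DRFT}"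
proof -
  let ?S = "{A::nat set. finite A} \<times> {E::(nat\<times>nat) set. finite E} \<times> (UNIV::(nat \<times> nat) set)"
  have c1: "countable {A::nat set. finite A}" by (rule countable_Collect_finite)
  have c2: "countable {A::(nat\<times>nat) set. finite A}" by (rule countable_Collect_finite)
  have "countable ?S" using c1 c2 by (intro countable_SIGMA) auto
  moreover have "{dball x s | x. x \<in> DRFT} \<subseteq> encd ` ?S"
  proof
    fix y assume "y \<in> {dball x s | x. x \<in> DRFT}"
    then obtain T rt v where G: "y = dball (T,rt,v) s" "family_tree T" "rt \<in> fst T"
      unfolding DRFT_def RFT_def by auto
    let ?X = "ball_set T rt s"
    let ?E = "{(v,w). v \<in> ?X \<and> w \<in> ?X \<and> snd T v = Some w}"
    have fX: "finite ?X" using ball_finite[OF G(2,3)] .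
    have "finite ?E" by (rule finite_subset[of _ "?X \<times> ?X"]) (use fX in auto)
    moreover have "y = encd (?X \<inter> fst T, ?E, rt, v)"
      unfolding G(1) dball_def ballT_def encd_def by (simp only: fst_conv snd_conv restr_enc[of T ?X])
    ultimately show "y \<in> encd ` ?S" using fX by blast
  qed
  ultimately show ?thesis by (meson countable_image countable_subset)
qed

lemma meas_local:
  assumes loc: "\<And>G. G \<in> RFT \<Longrightarrow> F G = F (rball G s)"
    and inv: "\<And>G G'. G \<in> RFT \<Longrightarrow> G' \<in> RFT \<Longrightarrow> rooted_iso (rball G s) (rball G' s) \<Longrightarrow>
               F (rball G s) \<Longrightarrow> F (rball G' s)"
  shows "{G \<in> RFT. F G} \<in> sets rooted_space"
proof -
  let ?I = "{rball G0 s | G0. G0 \<in> RFT \<and> F G0}"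
  have eq: "{G \<in> RFT. F G} = \<Union> (gen s ` ?I)"
  proof
    show "{G \<in> RFT. F G} \<subseteq> \<Union> (gen s ` ?I)"
    proof
      fix G assume G: "G \<in> {G \<in> RFT. F G}"
      then have "G \<in> gen s (rball G s)" unfolding gen_def using rooted_iso_refl by blast
      then show "G \<in> \<Union> (gen s ` ?I)" using G by blast
    qed
  next
    show "\<Union> (gen s ` ?I) \<subseteq> {G \<in> RFT. F G}"
    proof
      fix G assume "G \<in> \<Union> (gen s ` ?I)"
      then obtain G0 where G0: "G0 \<in> RFT" "F G0" "G \<in> gen s (rball G0 s)" by blast
      then have G: "G \<in> RFT" "rooted_iso (rball G s) (rball G0 s)" unfolding gen_def by auto
      have "F (rball G0 s)" using loc[OF G0(1)] G0(2) by simp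
      moreover have "rooted_iso (rball G0 s) (rball G s)"
      proof (rule rooted_iso_sym[OF _ _ G(2)])
        obtain T rt where "G = (T,rt)" "family_tree T" "rt \<in> fst T" using G(1) unfolding RFT_def by auto
        then show "wf (fst (rball G s))" "snd (rball G s) \<in> fst (fst (rball G s))"
          unfolding rball_def ballT_def using wf_restr[OF ft_wf] ball_0 by (auto simp: restr_def)
      qed
      ultimately have "F (rball G s)" using inv[OF G0(1) G(1)] by blast
      then show "G \<in> {G \<in> RFT. F G}" using loc[OF G(1)] G(1) by simp
    qed
  qed
  have "countable ?I" by (rule countable_subset[OF _ countable_balls[of s]]) blast
  then have "\<Union> (gen s ` ?I) \<in> sets rooted_space"
    using gen_sets by (intro sets.countable_UN') auto
  then show ?thesis using eq by simp
qed

lemma meas_local_d: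
  assumes loc: "\<And>x. x \<in> DRFT \<Longrightarrow> snd (snd x) \<in> ball_set (fst x) (fst (snd x)) s \<Longrightarrow> F x = F (dball x s)"
    and inv: "\<And>x x'. x \<in> DRFT \<Longrightarrow> x' \<in> DRFT \<Longrightarrow> snd (snd x) \<in> ball_set (fst x) (fst (snd x)) s \<Longrightarrow>
               snd (snd x') \<in> ball_set (fst x') (fst (snd x')) s \<Longrightarrow>
               doubly_iso (dball x s) (dball x' s) \<Longrightarrow> F (dball x s) \<Longrightarrow> F (dball x' s)"
  shows "{x \<in> DRFT. snd (snd x) \<in> ball_set (fst x) (fst (snd x)) s \<and> F x} \<in> sets doubly_space"
proof -
  let ?I = "{dball x0 s | x0. x0 \<in> DRFT \<and> snd (snd x0) \<in> ball_set (fst x0) (fst (snd x0)) s \<and> F x0}"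
  have eq: "{x \<in> DRFT. snd (snd x) \<in> ball_set (fst x) (fst (snd x)) s \<and> F x} = \<Union> (gend s ` ?I)"
  proof
    show "{x \<in> DRFT. snd (snd x) \<in> ball_set (fst x) (fst (snd x)) s \<and> F x} \<subseteq> \<Union> (gend s ` ?I)"
    proof
      fix x assume G: "x \<in> {x \<in> DRFT. snd (snd x) \<in> ball_set (fst x) (fst (snd x)) s \<and> F x}"
      then have "x \<in> gend s (dball x s)" unfolding gend_def using doubly_iso_refl by blast
      then show "x \<in> \<Union> (gend s ` ?I)" using G by blast
    qed
  next
    show "\<Union> (gend s ` ?I) \<subseteq> {x \<in> DRFT. snd (snd x) \<in> ball_set (fst x) (fst (snd x)) s \<and> F x}"
    proof
      fix x assume "x \<in> \<Union> (gend s ` ?I)"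
      then obtain x0 where G0: "x0 \<in> DRFT" "snd (snd x0) \<in> ball_set (fst x0) (fst (snd x0)) s" "F x0"
        "x \<in> gend s (dball x0 s)" by blast
      then have G: "x \<in> DRFT" "snd (snd x) \<in> ball_set (fst x) (fst (snd x)) s"
        "doubly_iso (dball x s) (dball x0 s)" unfolding gend_def by auto
      have "F (dball x0 s)" using loc[OF G0(1,2)] G0(3) by simp
      moreover have "doubly_iso (dball x0 s) (dball x s)"
      proof (rule doubly_iso_sym[OF _ _ _ G(3)])
        obtain T rt v where "x = (T,rt,v)" "family_tree T" "rt \<in> fst T" "v \<in> fst T"
          using G(1) unfolding DRFT_def RFT_def by auto
        then show "wf (fst (dball x s))" "fst (snd (dball x s)) \<in> fst (fst (dball x s))"
          "snd (snd (dball x s)) \<in> fst (fst (dball x s))"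
          unfolding dball_def ballT_def using wf_restr[OF ft_wf] ball_0 G(2) by (auto simp: restr_def)
      qed
      ultimately have "F (dball x s)" using inv[OF G0(1) G(1) G0(2) G(2)] by blast
      then show "x \<in> {x \<in> DRFT. snd (snd x) \<in> ball_set (fst x) (fst (snd x)) s \<and> F x}"
        using loc[OF G(1,2)] G by simp
    qed
  qed
  have "countable ?I" by (rule countable_subset[OF _ countable_dballs[of s]]) blast
  moreover have "gend s ` ?I \<subseteq> sets doubly_space" using gend_sets by blast
  ultimately have "\<Union> (gend s ` ?I) \<in> sets doubly_space"
    by (rule sets.countable_UN')
  then show ?thesis using eq by simp
qed

lemma meas_nat:
  fixes \<phi> :: "ftree \<times> nat \<Rightarrow> nat"
  assumes "\<And>c. {G \<in> RFT. \<phi> G = c} \<in> sets rooted_space"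
  shows "(\<lambda>G. of_nat (\<phi> G) :: ennreal) \<in> borel_measurable rooted_space"
proof -
  have "\<phi> \<in> measurable rooted_space (count_space UNIV)"
    unfolding measurable_count_space_eq2_countable space_rooted
  proof (intro conjI ballI)
    fix c :: nat
    have "\<phi> -` {c} \<inter> RFT = {G \<in> RFT. \<phi> G = c}" by blast
    then show "\<phi> -` {c} \<inter> RFT \<in> sets rooted_space" using assms by simp
  qed simp
  then show ?thesis by (rule measurable_compose) simp
qed

lemma rooted_iso_cong:
  "rooted_iso A B \<Longrightarrow> wf (fst A) \<Longrightarrow> snd A \<in> fst (fst A) \<Longrightarrow> rooted_iso A K = rooted_iso B K"
  using rooted_iso_sym rooted_iso_trans by blast

lemma restr_fst: "fst (restr T X) = X \<inter> fst T"
  unfolding restr_def by simp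

lemma rball_wf: "G \<in> RFT \<Longrightarrow> wf (fst (rball G s)) \<and> snd (rball G s) \<in> fst (fst (rball G s))"
proof -
  assume "G \<in> RFT"
  then obtain T rt where G: "G = (T,rt)" "family_tree T" "rt \<in> fst T" unfolding RFT_def by auto
  have "fst (rball G s) = restr T (ball_set T rt s)" "snd (rball G s) = rt"
    unfolding G(1) rball_def ballT_def by simp_all
  then show ?thesis using wf_restr[OF ft_wf[OF G(2)]] ball_0[of rt T s] G(3) restr_fst by simp
qed



definition Qt :: "nat \<Rightarrow> nat \<Rightarrow> ftree \<times> nat \<Rightarrow> ftree \<Rightarrow> nat \<Rightarrow> bool" where
  "Qt r j K T u \<longleftrightarrow> (\<exists>a. anc T j u = Some a \<and> rooted_iso (ballT (DT T a) u r, u) K)"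

lemma ballT_fst: "fst (ballT T u r) = ball_set T u r \<inter> fst T"
  unfolding ballT_def restr_def by simp

lemma wf_ballT: "wf T \<Longrightarrow> wf (ballT T u r)"
  unfolding ballT_def by (rule wf_restr)

lemma QL:
  assumes ft: "family_tree T" and uV: "u \<in> fst T" and B: "ball_set T u (2*r+j) \<subseteq> B"
  shows "Qt r j K (restr T B) u = Qt r j K T u"
proof -
  have wfT: "wf T" using ft_wf[OF ft] .
  have "ball_set T u j \<subseteq> B" using B ball_mono[of j "2*r+j" T u] by simp
  then have A: "anc (restr T B) j u = anc T j u" using anc_restr_iff[OF wfT] by blast
  show ?thesis
  proof (cases "anc T j u")
    case None then show ?thesis using A unfolding Qt_def by simp
  next
    case (Some a)
    then have "ballT (DT (restr T B) a) u r = ballT (DT T a) u r" using DL[OF ft uV _ B] by blast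
    then show ?thesis using A Some unfolding Qt_def by simp
  qed
qed

lemma QI:
  assumes wA: "wf A" and wB: "wf B" and i: "ft_iso A B f" and u: "u \<in> fst A"
  shows "Qt r j K B (f u) = Qt r j K A u"
proof (cases "anc A j u")
  case None then show ?thesis using iso_anc[OF wA i u] unfolding Qt_def by simp
next
  case (Some a)
  have aA: "a \<in> fst A" using anc_in_V[OF wA u Some] .
  have ab: "anc B j (f u) = Some (f a)" using iso_anc[OF wA i u] Some by simp
  have iD: "ft_iso (DT A a) (DT B (f a)) f" using iso_desc_tree[OF wA wB i aA] .
  have uD: "u \<in> fst (DT A a)" using Some desc_iff DT_fst by blast
  have wD: "wf (DT A a)" using wf_desc[OF wA aA] .
  have iB: "ft_iso (ballT (DT A a) u r) (ballT (DT B (f a)) (f u) r) f"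
    using iso_ballT[OF wD iD uD] .
  have ri: "rooted_iso (ballT (DT A a) u r, u) (ballT (DT B (f a)) (f u) r, f u)"
    unfolding rooted_iso_def using iB by auto
  have "rooted_iso (ballT (DT A a) u r, u) K = rooted_iso (ballT (DT B (f a)) (f u) r, f u) K"
    by (rule rooted_iso_cong[OF ri]) (use wf_ballT[OF wD] uD ball_0 ballT_fst in auto)
  then show ?thesis using Some ab unfolding Qt_def by simp
qed

lemma QD:
  assumes ft: "family_tree T" and oV: "rt \<in> fst T" and m: "anc T m u = Some rt" and jm: "j \<le> m"
  shows "Qt r j K (DT T rt) u = Qt r j K T u"
proof -
  obtain a where a: "anc T j u = Some a" using anc_Some_le[OF m jm] by blast
  have "anc T (j + (m - j)) u = Some rt" using m jm by simp
  then have "anc T (m - j) a = Some rt" using anc_add[of T j "m-j" u] a by simp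
  then have aD: "a \<in> descendants T rt" using desc_iff by blast
  have A: "anc (DT T rt) j u = Some a" using anc_DT[OF ft a aD] .
  have "desc_tree (DT T rt, a) = desc_tree (T, a)" using DT_DT[OF ft aD] .
  then have "DT (DT T rt) a = DT T a" by simp
  then show ?thesis using A a unfolding Qt_def by simp
qed

definition hset :: "nat \<Rightarrow> nat \<Rightarrow> ftree \<times> nat \<Rightarrow> nat \<Rightarrow> (ftree \<times> nat \<times> nat) set" where
  "hset r j K m = {x \<in> DRFT. anc (fst x) m (fst (snd x)) = Some (snd (snd x)) \<and> Qt r j K (fst x) (fst (snd x))}"

definition Eset :: "nat \<Rightarrow> nat \<Rightarrow> ftree \<times> nat \<Rightarrow> nat \<Rightarrow> (ftree \<times> nat) set" where
  "Eset r j K m = {G \<in> RFT. anc (fst G) m (snd G) \<noteq> None \<and> Qt r j K (fst G) (snd G)}"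

definition psi :: "nat \<Rightarrow> nat \<Rightarrow> ftree \<times> nat \<Rightarrow> nat \<Rightarrow> ftree \<times> nat \<Rightarrow> nat" where
  "psi r j K m G = card {u \<in> fst (fst G). anc (fst G) m u = Some (snd G) \<and> Qt r j K (fst G) u}"

lemma dball_eq: "dball (T,u,w) s = (restr T (ball_set T u s), u, w)"
  unfolding dball_def ballT_def by simp

lemma rball_eq: "rball (T,u) s = (restr T (ball_set T u s), u)"
  unfolding rball_def ballT_def by simp

lemma hset_meas: "hset r j K m \<in> sets doubly_space"
proof -
  define s where "s = 2*r + j + m"
  define F where "F x = (anc (fst x) m (fst (snd x)) = Some (snd (snd x)) \<and> Qt r j K (fst x) (fst (snd x)))"
    for x :: "ftree \<times> nat \<times> nat"
  have eq: "hset r j K m = {x \<in> DRFT. snd (snd x) \<in> ball_set (fst x) (fst (snd x)) s \<and> F x}"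
  proof -
    have "\<And>x. x \<in> DRFT \<Longrightarrow> F x \<Longrightarrow> snd (snd x) \<in> ball_set (fst x) (fst (snd x)) s"
    proof -
      fix x assume "x \<in> DRFT" "F x"
      then obtain T u w where x: "x = (T,u,w)" "family_tree T" "anc T m u = Some w"
        unfolding DRFT_def RFT_def F_def by auto
      then show "snd (snd x) \<in> ball_set (fst x) (fst (snd x)) s"
        using anc_ball[OF ft_wf[OF x(2)] x(3)] unfolding s_def by simp
    qed
    then show ?thesis unfolding hset_def F_def by blast
  qed
  have "{x \<in> DRFT. snd (snd x) \<in> ball_set (fst x) (fst (snd x)) s \<and> F x} \<in> sets doubly_space"
  proof (rule meas_local_d)
    fix x assume x: "x \<in> DRFT" "snd (snd x) \<in> ball_set (fst x) (fst (snd x)) s"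
    then obtain T u w where T: "x = (T,u,w)" "family_tree T" "u \<in> fst T"
      unfolding DRFT_def RFT_def by auto
    have wfT: "wf T" using ft_wf[OF T(2)] .
    have "ball_set T u m \<subseteq> ball_set T u s" using ball_mono unfolding s_def by simp
    then have A: "anc (restr T (ball_set T u s)) m u = anc T m u" using anc_restr_iff[OF wfT] by blast
    have "ball_set T u (2*r+j) \<subseteq> ball_set T u s" using ball_mono unfolding s_def by simp
    then have Q: "Qt r j K (restr T (ball_set T u s)) u = Qt r j K T u" using QL[OF T(2,3)] by blast
    show "F x = F (dball x s)" unfolding T(1) dball_eq F_def using A Q by simp
  next
    fix x x' assume x: "x \<in> DRFT" "x' \<in> DRFT" "doubly_iso (dball x s) (dball x' s)" "F (dball x s)"
    then obtain T u w T' u' w' where T: "x = (T,u,w)" "family_tree T" "u \<in> fst T"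
      "x' = (T',u',w')" "family_tree T'" "u' \<in> fst T'"
      unfolding DRFT_def RFT_def by auto
    let ?A = "restr T (ball_set T u s)" and ?A' = "restr T' (ball_set T' u' s)"
    obtain f where f: "ft_iso ?A ?A' f" "f u = u'" "f w = w'"
      using x(3) unfolding T(1,4) dball_eq doubly_iso_def by auto
    have wA: "wf ?A" "wf ?A'" using wf_restr ft_wf T by blast+
    have uA: "u \<in> fst ?A" using ball_0 T(3) restr_fst by auto
    have "anc ?A m u = Some w" "Qt r j K ?A u" using x(4) unfolding T(1) dball_eq F_def by auto
    then have "anc ?A' m u' = Some w'" "Qt r j K ?A' u'"
      using iso_anc[OF wA(1) f(1) uA] QI[OF wA f(1) uA] f by auto
    then show "F (dball x' s)" unfolding T(4) dball_eq F_def by simp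
  qed
  then show ?thesis using eq by simp
qed

lemma Eset_meas: "Eset r j K m \<in> sets rooted_space"
proof -
  define s where "s = 2*r + j + m"
  define F where "F G = (anc (fst G) m (snd G) \<noteq> None \<and> Qt r j K (fst G) (snd G))"
    for G :: "ftree \<times> nat"
  have "{G \<in> RFT. F G} \<in> sets rooted_space"
  proof (rule meas_local)
    fix G assume "G \<in> RFT"
    then obtain T u where T: "G = (T,u)" "family_tree T" "u \<in> fst T" unfolding RFT_def by auto
    have wfT: "wf T" using ft_wf[OF T(2)] .
    have "ball_set T u m \<subseteq> ball_set T u s" using ball_mono unfolding s_def by simp
    then have A: "anc (restr T (ball_set T u s)) m u = anc T m u" using anc_restr_iff[OF wfT] by blast
    have "ball_set T u (2*r+j) \<subseteq> ball_set T u s" using ball_mono unfolding s_def by simp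
    then have Q: "Qt r j K (restr T (ball_set T u s)) u = Qt r j K T u" using QL[OF T(2,3)] by blast
    show "F G = F (rball G s)" unfolding T(1) rball_eq F_def using A Q by simp
  next
    fix G G' assume x: "G \<in> RFT" "G' \<in> RFT" "rooted_iso (rball G s) (rball G' s)" "F (rball G s)"
    then obtain T u T' u' where T: "G = (T,u)" "family_tree T" "u \<in> fst T"
      "G' = (T',u')" "family_tree T'" "u' \<in> fst T'"
      unfolding RFT_def by auto
    let ?A = "restr T (ball_set T u s)" and ?A' = "restr T' (ball_set T' u' s)"
    obtain f where f: "ft_iso ?A ?A' f" "f u = u'"
      using x(3) unfolding T(1,4) rball_eq rooted_iso_def by auto
    have wA: "wf ?A" "wf ?A'" using wf_restr ft_wf T by blast+
    have uA: "u \<in> fst ?A" using ball_0 T(3) restr_fst by auto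
    have "anc ?A m u \<noteq> None" "Qt r j K ?A u" using x(4) unfolding T(1) rball_eq F_def by auto
    then have "anc ?A' m u' \<noteq> None" "Qt r j K ?A' u'"
      using iso_anc[OF wA(1) f(1) uA] QI[OF wA f(1) uA] f by auto
    then show "F (rball G' s)" unfolding T(4) rball_eq F_def by simp
  qed
  moreover have "Eset r j K m = {G \<in> RFT. F G}" unfolding Eset_def F_def by simp
  ultimately show ?thesis by simp
qed

lemma psi_iso:
  assumes wA: "wf A" and wB: "wf B" and i: "ft_iso A B f" and o: "rt \<in> fst A"
  shows "card {u \<in> fst B. anc B m u = Some (f rt) \<and> Qt r j K B u} = card {u \<in> fst A. anc A m u = Some rt \<and> Qt r j K A u}"
proof -
  let ?S = "{u \<in> fst A. anc A m u = Some rt \<and> Qt r j K A u}"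
  have "{u \<in> fst B. anc B m u = Some (f rt) \<and> Qt r j K B u} = f ` ?S"
  proof
    show "{u \<in> fst B. anc B m u = Some (f rt) \<and> Qt r j K B u} \<subseteq> f ` ?S"
    proof
      fix x assume x: "x \<in> {u \<in> fst B. anc B m u = Some (f rt) \<and> Qt r j K B u}"
      then obtain u where u: "u \<in> fst A" "x = f u" using iso_surj[OF i] by blast
      have "map_option f (anc A m u) = Some (f rt)" using x u iso_anc[OF wA i u(1)] by simp
      then obtain o' where o': "anc A m u = Some o'" "f o' = f rt" by auto
      have "o' \<in> fst A" using anc_in_V[OF wA u(1) o'(1)] .
      then have "o' = rt" using iso_inj[OF i _ o] o' by blast
      moreover have "Qt r j K A u" using x u QI[OF wA wB i u(1)] by simp
      ultimately show "x \<in> f ` ?S" using u o' by blast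
    qed
  next
    show "f ` ?S \<subseteq> {u \<in> fst B. anc B m u = Some (f rt) \<and> Qt r j K B u}"
    proof
      fix x assume "x \<in> f ` ?S"
      then obtain u where u: "u \<in> fst A" "anc A m u = Some rt" "Qt r j K A u" "x = f u" by blast
      have "anc B m x = Some (f rt)" using iso_anc[OF wA i u(1)] u by simp
      moreover have "Qt r j K B x" using QI[OF wA wB i u(1), of r j K] u by simp
      moreover have "x \<in> fst B" using iso_in[OF i u(1)] u by simp
      ultimately show "x \<in> {u \<in> fst B. anc B m u = Some (f rt) \<and> Qt r j K B u}" by blast
    qed
  qed
  moreover have "inj_on f ?S"
  proof (rule inj_on_subset)
    show "inj_on f (fst A)" using iso_bij[OF i] unfolding bij_betw_def by blast
  qed blast
  ultimately show ?thesis by (simp add: card_image)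
qed

lemma psi_local:
  assumes ft: "family_tree T" and oV: "rt \<in> fst T" and s: "2*m + 2*r + j \<le> s"
  shows "psi r j K m (rball (T,rt) s) = psi r j K m (T,rt)"
proof -
  have wfT: "wf T" using ft_wf[OF ft] .
  let ?B = "ball_set T rt s"
  have key: "\<And>u. u \<in> fst T \<Longrightarrow> anc T m u = Some rt \<Longrightarrow>
     anc (restr T ?B) m u = anc T m u \<and> Qt r j K (restr T ?B) u = Qt r j K T u \<and> u \<in> ?B"
  proof -
    fix u assume u: "u \<in> fst T" "anc T m u = Some rt"
    have ub: "u \<in> ball_set T rt m" using anc_ball'[OF wfT u(2)] by simp
    have "ball_set T u (m + 2*r + j) \<subseteq> ball_set T rt (m + (m + 2*r + j))" using ball_trans[OF ub] .
    also have "\<dots> \<subseteq> ?B" using ball_mono s by simp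
    finally have bb: "ball_set T u (m + 2*r + j) \<subseteq> ?B" .
    have "ball_set T u m \<subseteq> ?B" using bb ball_mono[of m "m + 2*r + j" T u] by simp
    moreover have "ball_set T u (2*r+j) \<subseteq> ?B" using bb ball_mono[of "2*r+j" "m + 2*r + j" T u] by simp
    moreover have "u \<in> ?B" using ub ball_mono[of m s T rt] s by auto
    ultimately show "anc (restr T ?B) m u = anc T m u \<and> Qt r j K (restr T ?B) u = Qt r j K T u \<and> u \<in> ?B"
      using anc_restr_iff[OF wfT] QL[OF ft u(1)] by blast
  qed
  have "{u \<in> fst (restr T ?B). anc (restr T ?B) m u = Some rt \<and> Qt r j K (restr T ?B) u}
      = {u \<in> fst T. anc T m u = Some rt \<and> Qt r j K T u}"
  proof
    show "{u \<in> fst (restr T ?B). anc (restr T ?B) m u = Some rt \<and> Qt r j K (restr T ?B) u}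
      \<subseteq> {u \<in> fst T. anc T m u = Some rt \<and> Qt r j K T u}"
    proof
      fix u assume u: "u \<in> {u \<in> fst (restr T ?B). anc (restr T ?B) m u = Some rt \<and> Qt r j K (restr T ?B) u}"
      then have uV: "u \<in> fst T" using restr_fst by auto
      have "anc T m u = Some rt" using u sub_anc[OF sub_restr_wf[OF wfT]] by blast
      then show "u \<in> {u \<in> fst T. anc T m u = Some rt \<and> Qt r j K T u}" using key[OF uV] u uV by auto
    qed
  next
    show "{u \<in> fst T. anc T m u = Some rt \<and> Qt r j K T u}
      \<subseteq> {u \<in> fst (restr T ?B). anc (restr T ?B) m u = Some rt \<and> Qt r j K (restr T ?B) u}"
      using key restr_fst by auto
  qed
  then show ?thesis unfolding psi_def rball_eq by simp
qed

lemma psi_meas: "(\<lambda>G. of_nat (psi r j K m G) :: ennreal) \<in> borel_measurable rooted_space"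
proof (rule meas_nat)
  fix c
  define s where "s = 2*m + 2*r + j"
  show "{G \<in> RFT. psi r j K m G = c} \<in> sets rooted_space"
  proof (rule meas_local[where s = s])
    fix G assume "G \<in> RFT"
    then obtain T u where T: "G = (T,u)" "family_tree T" "u \<in> fst T" unfolding RFT_def by auto
    show "(psi r j K m G = c) = (psi r j K m (rball G s) = c)"
      using psi_local[OF T(2,3)] T(1) unfolding s_def by simp
  next
    fix G G' assume x: "G \<in> RFT" "G' \<in> RFT" "rooted_iso (rball G s) (rball G' s)" "psi r j K m (rball G s) = c"
    then obtain T u T' u' where T: "G = (T,u)" "family_tree T" "u \<in> fst T"
      "G' = (T',u')" "family_tree T'" "u' \<in> fst T'"
      unfolding RFT_def by auto
    let ?A = "restr T (ball_set T u s)" and ?A' = "restr T' (ball_set T' u' s)"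
    obtain f where f: "ft_iso ?A ?A' f" "f u = u'"
      using x(3) unfolding T(1,4) rball_eq rooted_iso_def by auto
    have wA: "wf ?A" "wf ?A'" using wf_restr ft_wf T by blast+
    have uA: "u \<in> fst ?A" using ball_0 T(3) restr_fst by auto
    have "psi r j K m (rball G' s) = psi r j K m (rball G s)"
      unfolding T(1,4) rball_eq psi_def using psi_iso[OF wA f(1) uA] f(2) by simp
    then show "psi r j K m (rball G' s) = c" using x(4) by simp
  qed
qed

lemma rball_desc: "rball (desc_tree (T,rt)) r = (ballT (DT T rt) rt r, rt)"
  unfolding rball_def using desc_tree_eq[of T rt] by (metis fst_conv snd_conv)

lemma desc_meas: "desc_tree \<in> measurable rooted_space rooted_space"
proof -
  have "desc_tree \<in> measurable rooted_space (sigma RFT {gen r K | r K. True})"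
  proof (rule measurable_measure_of[OF gens_Pow])
    show "desc_tree \<in> space rooted_space \<rightarrow> RFT" using desc_tree_RFT space_rooted by auto
  next
    fix y assume "y \<in> {gen r K | r K. True}"
    then obtain r K where y: "y = gen r K" by blast
    have eq: "desc_tree -` y \<inter> space rooted_space = {G \<in> RFT. rooted_iso (rball (desc_tree G) r) K}"
      unfolding y gen_def space_rooted using desc_tree_RFT by auto
    have "{G \<in> RFT. rooted_iso (rball (desc_tree G) r) K} \<in> sets rooted_space"
    proof (rule meas_local[where s = "2*r"])
      fix G assume "G \<in> RFT"
      then obtain T u where T: "G = (T,u)" "family_tree T" "u \<in> fst T" unfolding RFT_def by auto
      have "ballT (DT (restr T (ball_set T u (2*r))) u) u r = ballT (DT T u) u r"
        using DL[OF T(2,3), of 0 u r] by simp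
      then show "rooted_iso (rball (desc_tree G) r) K = rooted_iso (rball (desc_tree (rball G (2*r))) r) K"
        unfolding T(1) rball_eq rball_desc by simp
    next
      fix G G' assume x: "G \<in> RFT" "G' \<in> RFT" "rooted_iso (rball G (2*r)) (rball G' (2*r))"
        "rooted_iso (rball (desc_tree (rball G (2*r))) r) K"
      then obtain T u T' u' where T: "G = (T,u)" "family_tree T" "u \<in> fst T"
        "G' = (T',u')" "family_tree T'" "u' \<in> fst T'"
        unfolding RFT_def by auto
      let ?A = "restr T (ball_set T u (2*r))" and ?A' = "restr T' (ball_set T' u' (2*r))"
      obtain f where f: "ft_iso ?A ?A' f" "f u = u'"
        using x(3) unfolding T(1,4) rball_eq rooted_iso_def by auto
      have wA: "wf ?A" "wf ?A'" using wf_restr ft_wf T by blast+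
      have uA: "u \<in> fst ?A" using ball_0 T(3) restr_fst by auto
      have iD: "ft_iso (DT ?A u) (DT ?A' u') f" using iso_desc_tree[OF wA f(1) uA] f(2) by simp
      have uD: "u \<in> fst (DT ?A u)" using desc_self DT_fst by metis
      have wD: "wf (DT ?A u)" using wf_desc[OF wA(1) uA] .
      have iB: "ft_iso (ballT (DT ?A u) u r) (ballT (DT ?A' u') u' r) f"
        using iso_ballT[OF wD iD uD] f(2) by simp
      have ri: "rooted_iso (ballT (DT ?A u) u r, u) (ballT (DT ?A' u') u' r, u')"
        unfolding rooted_iso_def using iB f(2) by auto
      have "rooted_iso (ballT (DT ?A u) u r, u) K = rooted_iso (ballT (DT ?A' u') u' r, u') K"
        by (rule rooted_iso_cong[OF ri]) (use wf_ballT[OF wD] uD ball_0 ballT_fst in auto)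
      then show "rooted_iso (rball (desc_tree (rball G' (2*r))) r) K"
        using x(4) unfolding T(1,4) rball_eq rball_desc by simp
    qed
    then show "desc_tree -` y \<inter> space rooted_space \<in> sets rooted_space" using eq by simp
  qed
  then show ?thesis unfolding rooted_space_alt .
qed



lemma count_indicator:
  assumes "A \<subseteq> V" "finite A"
  shows "(\<integral>\<^sup>+ w. indicator A w \<partial>count_space V) = of_nat (card A)"
proof -
  have "A \<in> sets (count_space V)" using assms by simp
  then show ?thesis using assms by simp
qed

lemma lhs_eq:
  assumes G: "G \<in> RFT"
  shows "(\<integral>\<^sup>+ w. indicator (hset r j K m) (fst G, snd G, w) \<partial>count_space (fst (fst G)))
       = indicator (Eset r j K m) G"
proof -
  obtain T u where T: "G = (T,u)" "family_tree T" "u \<in> fst T" using G unfolding RFT_def by auto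
  have wfT: "wf T" using ft_wf[OF T(2)] .
  let ?A = "{w \<in> fst T. anc T m u = Some w \<and> Qt r j K T u}"
  have "(\<integral>\<^sup>+ w. indicator (hset r j K m) (T, u, w) \<partial>count_space (fst T))
      = (\<integral>\<^sup>+ w. indicator ?A w \<partial>count_space (fst T))"
  proof (rule nn_integral_cong)
    fix w assume "w \<in> space (count_space (fst T))"
    then have w: "w \<in> fst T" by simp
    have "(T,u,w) \<in> DRFT" using T w unfolding DRFT_def RFT_def by simp
    then show "indicator (hset r j K m) (T, u, w) = indicator ?A w"
      unfolding hset_def indicator_def using w by simp
  qed
  also have "\<dots> = of_nat (card ?A)"
  proof (rule count_indicator)
    have "?A \<subseteq> set_option (anc T m u)" by auto
    then show "finite ?A" by (rule finite_subset) simp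
  qed auto
  also have "\<dots> = indicator (Eset r j K m) (T,u)"
  proof (cases "anc T m u")
    case None
    then have "?A = {}" by auto
    then show ?thesis using None unfolding Eset_def by simp
  next
    case (Some b)
    have bV: "b \<in> fst T" using anc_in_V[OF wfT T(3) Some] .
    show ?thesis
    proof (cases "Qt r j K T u")
      case True
      then have "?A = {b}" using Some bV by auto
      then show ?thesis using Some True G T(1) unfolding Eset_def by simp
    next
      case False
      then have "?A = {}" by auto
      then show ?thesis using False unfolding Eset_def by simp
    qed
  qed
  finally show ?thesis using T(1) by simp
qed

lemma rhs_eq:
  assumes G: "G \<in> RFT" and jm: "j \<le> m"
  shows "(\<integral>\<^sup>+ w. indicator (hset r j K m) (fst G, w, snd G) \<partial>count_space (fst (fst G)))
       = of_nat (psi r j K m (desc_tree G))"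
proof -
  obtain T u where T: "G = (T,u)" "family_tree T" "u \<in> fst T" using G unfolding RFT_def by auto
  have wfT: "wf T" using ft_wf[OF T(2)] .
  let ?A = "{w \<in> fst T. anc T m w = Some u \<and> Qt r j K T w}"
  have "(\<integral>\<^sup>+ w. indicator (hset r j K m) (T, w, u) \<partial>count_space (fst T))
      = (\<integral>\<^sup>+ w. indicator ?A w \<partial>count_space (fst T))"
  proof (rule nn_integral_cong)
    fix w assume "w \<in> space (count_space (fst T))"
    then have w: "w \<in> fst T" by simp
    have "(T,w,u) \<in> DRFT" using T w unfolding DRFT_def RFT_def by simp
    then show "indicator (hset r j K m) (T, w, u) = indicator ?A w"
      unfolding hset_def indicator_def using w by simp
  qed
  also have "\<dots> = of_nat (card ?A)"
  proof (rule count_indicator)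
    have "?A \<subseteq> ball_set T u m" using anc_ball'[OF wfT] by blast
    then show "finite ?A" using ball_finite[OF T(2,3)] by (rule finite_subset)
  qed auto
  also have "card ?A = psi r j K m (desc_tree G)"
  proof -
    have "desc_tree G = (DT T u, u)" using T(1) desc_tree_eq by metis
    moreover have "{w \<in> fst (DT T u). anc (DT T u) m w = Some u \<and> Qt r j K (DT T u) w} = ?A"
    proof
      show "{w \<in> fst (DT T u). anc (DT T u) m w = Some u \<and> Qt r j K (DT T u) w} \<subseteq> ?A"
      proof
        fix w assume w: "w \<in> {w \<in> fst (DT T u). anc (DT T u) m w = Some u \<and> Qt r j K (DT T u) w}"
        then have a: "anc T m w = Some u" using anc_DT_iff[OF T(2,3) desc_self] by blast
        have "w \<in> fst T" using w desc_V[OF wfT T(3)] DT_fst by auto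
        then show "w \<in> ?A" using a w QD[OF T(2,3) a jm] by auto
      qed
    next
      show "?A \<subseteq> {w \<in> fst (DT T u). anc (DT T u) m w = Some u \<and> Qt r j K (DT T u) w}"
      proof
        fix w assume w: "w \<in> ?A"
        then have a: "anc T m w = Some u" by blast
        have "w \<in> fst (DT T u)" using a desc_iff DT_fst by blast
        then show "w \<in> {w \<in> fst (DT T u). anc (DT T u) m w = Some u \<and> Qt r j K (DT T u) w}"
          using a w QD[OF T(2,3) a jm] anc_DT_iff[OF T(2,3) desc_self] by auto
      qed
    qed
    ultimately show ?thesis unfolding psi_def by simp
  qed
  finally show ?thesis using T(1) by simp
qed

lemma lemmaA:
  assumes sM: "sets M = sets rooted_space" and um: "unimodular M" and jm: "j \<le> m"
  shows "emeasure M (Eset r j K m) = (\<integral>\<^sup>+ x. of_nat (psi r j K m x) \<partial>distr M rooted_space desc_tree)"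
proof -
  have spM: "space M = RFT" using sets_eq_imp_space_eq[OF sM] space_rooted by simp
  have hm: "(indicator (hset r j K m) :: _ \<Rightarrow> ennreal) \<in> borel_measurable doubly_space"
    using hset_meas by (rule borel_measurable_indicator)
  have "emeasure M (Eset r j K m) = (\<integral>\<^sup>+ G. indicator (Eset r j K m) G \<partial>M)"
    using Eset_meas sM by simp
  also have "\<dots> = (\<integral>\<^sup>+ G. (\<integral>\<^sup>+ w. indicator (hset r j K m) (fst G, snd G, w) \<partial>count_space (fst (fst G))) \<partial>M)"
    by (rule nn_integral_cong) (use lhs_eq spM in simp)
  also have "\<dots> = (\<integral>\<^sup>+ G. (\<integral>\<^sup>+ w. indicator (hset r j K m) (fst G, w, snd G) \<partial>count_space (fst (fst G))) \<partial>M)"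
    using um hm unfolding unimodular_def by blast
  also have "\<dots> = (\<integral>\<^sup>+ G. of_nat (psi r j K m (desc_tree G)) \<partial>M)"
    by (rule nn_integral_cong) (use rhs_eq[OF _ jm] spM in simp)
  also have "\<dots> = (\<integral>\<^sup>+ x. of_nat (psi r j K m x) \<partial>distr M rooted_space desc_tree)"
  proof (rule nn_integral_distr[symmetric])
    have "measurable M rooted_space = measurable rooted_space rooted_space"
      by (rule measurable_cong_sets[OF sM refl])
    then show "desc_tree \<in> measurable M rooted_space" using desc_meas by simp
    have "borel_measurable (distr M rooted_space desc_tree) = borel_measurable rooted_space"
      by (rule measurable_cong_sets) simp_all
    then show "(\<lambda>x. of_nat (psi r j K m x) :: ennreal) \<in> borel_measurable (distr M rooted_space desc_tree)"
      using psi_meas by simp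
  qed
  finally show ?thesis .
qed



lemma ball_ball_iso:
  assumes G: "G \<in> RFT" "G' \<in> RFT" and rs: "r \<le> s" and i: "rooted_iso (rball G s) (rball G' s)"
  shows "rooted_iso (rball G r) (rball G' r)"
proof -
  obtain T u T' u' where T: "G = (T,u)" "family_tree T" "u \<in> fst T"
    "G' = (T',u')" "family_tree T'" "u' \<in> fst T'" using G unfolding RFT_def by auto
  let ?A = "restr T (ball_set T u s)" and ?A' = "restr T' (ball_set T' u' s)"
  obtain f where f: "ft_iso ?A ?A' f" "f u = u'" using i unfolding T(1,4) rball_eq rooted_iso_def by auto
  have wA: "wf ?A" using wf_restr ft_wf T by blast
  have uA: "u \<in> fst ?A" using ball_0 T(3) restr_fst by auto
  have "ft_iso (ballT ?A u r) (ballT ?A' u' r) f" using iso_ballT[OF wA f(1) uA] f(2) by simp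
  moreover have "ballT ?A u r = ballT T u r"
    using ballT_restr[OF ft_wf[OF T(2)] T(3)] ball_mono[OF rs] by blast
  moreover have "ballT ?A' u' r = ballT T' u' r"
    using ballT_restr[OF ft_wf[OF T(5)] T(6)] ball_mono[OF rs] by blast
  ultimately show ?thesis unfolding T(1,4) rball_def rooted_iso_def using f(2) by auto
qed

lemma gen_rep:
  assumes G0: "G0 \<in> gen r K"
  shows "gen r K = gen r (rball G0 r)"
proof -
  have G0': "G0 \<in> RFT" "rooted_iso (rball G0 r) K" using G0 unfolding gen_def by auto
  have w: "wf (fst (rball G0 r))" "snd (rball G0 r) \<in> fst (fst (rball G0 r))" using rball_wf[OF G0'(1)] by auto
  have "rooted_iso K (rball G0 r)" using rooted_iso_sym[OF w G0'(2)] .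
  then show ?thesis unfolding gen_def using G0'(2) rooted_iso_trans by blast
qed

lemma gen_empty: "gen 0 (({}, \<lambda>_. None), 0) = {}"
proof -
  have "\<And>G. G \<in> RFT \<Longrightarrow> \<not> rooted_iso (rball G 0) (({}, \<lambda>_. None), 0)"
  proof
    fix G assume G: "G \<in> RFT" "rooted_iso (rball G 0) (({}, \<lambda>_. None), 0)"
    then obtain f where "ft_iso (fst (rball G 0)) ({}, \<lambda>_. None) f" unfolding rooted_iso_def by auto
    then have "bij_betw f (fst (fst (rball G 0))) {}" using iso_bij by fastforce
    then have "fst (fst (rball G 0)) = {}" by (simp add: bij_betw_def)
    then show False using rball_wf[OF G(1)] by blast
  qed
  then show ?thesis unfolding gen_def by blast
qed

lemma RFT_gen: "RFT = gen 0 (({0}, \<lambda>_. None), 0)"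
proof -
  have "\<And>G. G \<in> RFT \<Longrightarrow> rooted_iso (rball G 0) (({0}, \<lambda>_. None), 0)"
  proof -
    fix G assume "G \<in> RFT"
    then obtain T u where T: "G = (T,u)" "family_tree T" "u \<in> fst T" unfolding RFT_def by auto
    have b0: "ball_set T u 0 = {u}" unfolding ball_set_def by auto
    have nl: "snd T u \<noteq> Some u" using ft_noloop[OF T(2)] .
    have fst: "fst (restr T {u}) = {u}" using T(3) restr_fst by auto
    have snd: "snd (restr T {u}) u = None" using nl unfolding restr_def by (auto split: option.splits)
    have "ft_iso (restr T {u}) ({0}, \<lambda>_. None) (\<lambda>_. 0)"
      unfolding ft_iso_def using fst snd by (auto simp: bij_betw_def)
    then show "rooted_iso (rball G 0) (({0}, \<lambda>_. None), 0)"
      unfolding T(1) rball_eq b0 rooted_iso_def by auto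
  qed
  then show ?thesis unfolding gen_def by blast
qed

lemma gens_Int_stable: "Int_stable {gen r K | r K. True}"
proof -
  have le: "\<And>r s K K'. r \<le> s \<Longrightarrow> gen r K \<inter> gen s K' \<in> {gen r K | r K. True}"
  proof -
    fix r s K K' assume rs: "(r::nat) \<le> s"
    show "gen r K \<inter> gen s K' \<in> {gen r K | r K. True}"
    proof (cases "gen r K \<inter> gen s K' = {}")
      case True then show ?thesis using gen_empty by (metis (mono_tags, lifting) mem_Collect_eq)
    next
      case False
      then obtain G0 where G0: "G0 \<in> gen r K" "G0 \<in> gen s K'" by blast
      have e1: "gen r K = gen r (rball G0 r)" using gen_rep[OF G0(1)] .
      have e2: "gen s K' = gen s (rball G0 s)" using gen_rep[OF G0(2)] .
      have R0: "G0 \<in> RFT" using G0 unfolding gen_def by auto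
      have "gen s K' \<subseteq> gen r K"
      proof
        fix G assume "G \<in> gen s K'"
        then have G: "G \<in> RFT" "rooted_iso (rball G s) (rball G0 s)" using e2 unfolding gen_def by auto
        then have "rooted_iso (rball G r) (rball G0 r)" using ball_ball_iso[OF G(1) R0 rs] by blast
        then show "G \<in> gen r K" using e1 G(1) unfolding gen_def by blast
      qed
      then have "gen r K \<inter> gen s K' = gen s K'" by blast
      then show ?thesis by blast
    qed
  qed
  show ?thesis unfolding Int_stable_def
  proof (intro ballI)
    fix a b assume "a \<in> {gen r K | r K. True}" "b \<in> {gen r K | r K. True}"
    then obtain r K s K' where ab: "a = gen r K" "b = gen s K'" by blast
    show "a \<inter> b \<in> {gen r K | r K. True}"
    proof (cases "r \<le> s")
      case True then show ?thesis using le ab by blast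
    next
      case False
      then have "gen s K' \<inter> gen r K \<in> {gen r K | r K. True}" using le by simp
      then show ?thesis using ab by (simp add: Int_commute)
    qed
  qed
qed

lemma Eset_eq:
  assumes sM: "sets M1 = sets rooted_space" "sets M2 = sets rooted_space"
    and um: "unimodular M1" "unimodular M2"
    and d: "distr M1 rooted_space desc_tree = distr M2 rooted_space desc_tree"
    and jm: "j \<le> m"
  shows "emeasure M1 (Eset r j K m) = emeasure M2 (Eset r j K m)"
  using lemmaA[OF sM(1) um(1) jm] lemmaA[OF sM(2) um(2) jm] d by simp

lemma Eset_char:
  assumes "G \<in> RFT"
  shows "G \<in> Eset r j K m \<longleftrightarrow> anc (fst G) m (snd G) \<noteq> None \<and> Qt r j K (fst G) (snd G)"
  using assms unfolding Eset_def by simp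

lemma case1:
  assumes G0: "G0 = (T0,u0)" "G0 \<in> RFT" and nn: "anc (ballT T0 u0 r) r u0 \<noteq> None"
  shows "gen r (rball G0 r) = Eset r r (rball G0 r) r"
proof -
  let ?K = "rball G0 r"
  have wK: "wf (fst ?K)" "snd ?K \<in> fst (fst ?K)" using rball_wf[OF G0(2)] by auto
  have "\<And>G. G \<in> RFT \<Longrightarrow> G \<in> gen r ?K \<longleftrightarrow> G \<in> Eset r r ?K r"
  proof -
    fix G assume G: "G \<in> RFT"
    then obtain T u where T: "G = (T,u)" "family_tree T" "u \<in> fst T" unfolding RFT_def by auto
    have wfT: "wf T" using ft_wf[OF T(2)] .
    have mem: "G \<in> gen r ?K \<longleftrightarrow> rooted_iso (ballT T u r, u) ?K"
      unfolding gen_def T(1) rball_def using G T(1) by simp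
    show "G \<in> gen r ?K \<longleftrightarrow> G \<in> Eset r r ?K r"
    proof
      assume "G \<in> gen r ?K"
      then have i: "rooted_iso (ballT T u r, u) ?K" using mem by simp
      then obtain f where f: "ft_iso (ballT T u r) (ballT T0 u0 r) f" "f u = u0"
        unfolding rooted_iso_def G0(1) rball_def by auto
      have wB: "wf (ballT T u r)" using wf_ballT[OF wfT] .
      have uB: "u \<in> fst (ballT T u r)" using ballT_fst ball_0 T(3) by auto
      have "anc (ballT T0 u0 r) r u0 = map_option f (anc (ballT T u r) r u)"
        using iso_anc[OF wB f(1) uB] f(2) by simp
      then obtain b where b: "anc (ballT T u r) r u = Some b" using nn by auto
      have bT: "anc T r u = Some b" using sub_anc[OF sub_restr_wf[OF wfT]] b unfolding ballT_def by blast
      have "ballT (DT T b) u r = ballT T u r" using case1_ball[OF T(2,3) bT] .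
      then have "Qt r r ?K T u" unfolding Qt_def using bT i by auto
      then show "G \<in> Eset r r ?K r" using G T(1) bT unfolding Eset_def by simp
    next
      assume "G \<in> Eset r r ?K r"
      then obtain a where a: "anc T r u = Some a" "rooted_iso (ballT (DT T a) u r, u) ?K"
        unfolding Eset_def Qt_def T(1) by auto
      have "ballT (DT T a) u r = ballT T u r" using case1_ball[OF T(2,3) a(1)] .
      then show "G \<in> gen r ?K" using mem a(2) by simp
    qed
  qed
  moreover have "gen r ?K \<subseteq> RFT" "Eset r r ?K r \<subseteq> RFT" unfolding gen_def Eset_def by auto
  ultimately show ?thesis by blast
qed

lemma case2:
  assumes G0: "G0 = (T0,u0)" "G0 \<in> RFT" and t: "anc (ballT T0 u0 r) j u0 = Some t"
    and top: "snd (ballT T0 u0 r) t = None" and jr: "j < r"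
  shows "gen r (rball G0 r) = Eset r j (rball G0 r) j - Eset r j (rball G0 r) (Suc j)"
    and "Eset r j (rball G0 r) (Suc j) \<subseteq> Eset r j (rball G0 r) j"
proof -
  let ?K = "rball G0 r"
  let ?A0 = "ballT T0 u0 r"
  have wK: "wf (fst ?K)" "snd ?K \<in> fst (fst ?K)" using rball_wf[OF G0(2)] by auto
  have Kf: "fst ?K = ?A0" "snd ?K = u0" unfolding G0(1) rball_def by simp_all
  have anc0: "anc ?A0 (Suc j) u0 = None" using t top anc_Suc_last[of ?A0 j u0] by simp
  have ch: "\<And>G. G \<in> RFT \<Longrightarrow> G \<in> gen r ?K \<longleftrightarrow>
      (\<exists>a. anc (fst G) j (snd G) = Some a \<and> snd (fst G) a = None \<and>
           rooted_iso (ballT (DT (fst G) a) (snd G) r, snd G) ?K)"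
  proof -
    fix G assume G: "G \<in> RFT"
    then obtain T u where T: "G = (T,u)" "family_tree T" "u \<in> fst T" unfolding RFT_def by auto
    have wfT: "wf T" using ft_wf[OF T(2)] .
    have mem: "G \<in> gen r ?K \<longleftrightarrow> rooted_iso (ballT T u r, u) ?K"
      unfolding gen_def T(1) rball_def using G T(1) by simp
    have topD: "\<And>a. a \<in> fst T \<Longrightarrow> snd T a = None \<Longrightarrow> DT T a = T"
      using top_desc_tree[OF T(2)] by simp
    show "G \<in> gen r ?K \<longleftrightarrow> (\<exists>a. anc (fst G) j (snd G) = Some a \<and> snd (fst G) a = None \<and>
           rooted_iso (ballT (DT (fst G) a) (snd G) r, snd G) ?K)"
    proof
      assume "G \<in> gen r ?K"
      then have i: "rooted_iso (ballT T u r, u) ?K" using mem by simp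
      have wB: "wf (ballT T u r)" using wf_ballT[OF wfT] .
      have uB: "u \<in> fst (ballT T u r)" using ballT_fst ball_0 T(3) by auto
      have "rooted_iso ?K (ballT T u r, u)" using rooted_iso_sym[of "(ballT T u r, u)" ?K] wB uB i by simp
      then obtain g where g: "ft_iso ?A0 (ballT T u r) g" "g u0 = u" unfolding rooted_iso_def Kf by auto
      obtain f where f: "ft_iso (ballT T u r) ?A0 f" "f u = u0" using i unfolding rooted_iso_def Kf by auto
      have u0A: "u0 \<in> fst ?A0" using wK Kf by simp
      have "anc (ballT T u r) j u = Some (g t)"
        using iso_anc[OF wK(1)[unfolded Kf] g(1) u0A] t g(2) by simp
      then have aT: "anc T j u = Some (g t)" using sub_anc[OF sub_restr_wf[OF wfT]] unfolding ballT_def by blast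
      have aV: "g t \<in> fst T" using anc_in_V[OF wfT T(3) aT] .
      have nt: "snd T (g t) = None"
      proof (rule ccontr)
        assume "snd T (g t) \<noteq> None"
        then obtain p where p: "snd T (g t) = Some p" by blast
        have "anc T (Suc j) u = Some p" using aT p anc_Suc_last[of T j u] by simp
        moreover have "ball_set T u (Suc j) \<subseteq> ball_set T u r" using ball_mono jr by simp
        ultimately have "anc (ballT T u r) (Suc j) u = Some p" using anc_local[OF wfT] unfolding ballT_def by blast
        then have "anc ?A0 (Suc j) u0 = Some (f p)" using iso_anc[OF wB f(1) uB, of "Suc j"] f(2) by (simp del: anc.simps)
        then show False using anc0 by simp
      qed
      have "DT T (g t) = T" using topD[OF aV nt] .
      then show "\<exists>a. anc (fst G) j (snd G) = Some a \<and> snd (fst G) a = None \<and>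
           rooted_iso (ballT (DT (fst G) a) (snd G) r, snd G) ?K"
        using aT nt i T(1) by auto
    next
      assume "\<exists>a. anc (fst G) j (snd G) = Some a \<and> snd (fst G) a = None \<and>
           rooted_iso (ballT (DT (fst G) a) (snd G) r, snd G) ?K"
      then obtain a where a: "anc T j u = Some a" "snd T a = None" "rooted_iso (ballT (DT T a) u r, u) ?K"
        using T(1) by auto
      have "DT T a = T" using topD[OF anc_in_V[OF wfT T(3) a(1)] a(2)] .
      then show "G \<in> gen r ?K" using mem a(3) by simp
    qed
  qed
  have e1: "\<And>G. G \<in> RFT \<Longrightarrow> G \<in> Eset r j ?K j \<longleftrightarrow>
      (\<exists>a. anc (fst G) j (snd G) = Some a \<and> rooted_iso (ballT (DT (fst G) a) (snd G) r, snd G) ?K)"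
    unfolding Eset_def Qt_def by auto
  have e2: "\<And>G. G \<in> RFT \<Longrightarrow> G \<in> Eset r j ?K (Suc j) \<longleftrightarrow>
      (\<exists>a. anc (fst G) j (snd G) = Some a \<and> snd (fst G) a \<noteq> None \<and>
        rooted_iso (ballT (DT (fst G) a) (snd G) r, snd G) ?K)"
  proof -
    fix G assume "G \<in> RFT"
    have "\<And>a. anc (fst G) j (snd G) = Some a \<Longrightarrow> (anc (fst G) (Suc j) (snd G) \<noteq> None \<longleftrightarrow> snd (fst G) a \<noteq> None)"
      using anc_Suc_last by simp
    then show "G \<in> Eset r j ?K (Suc j) \<longleftrightarrow>
      (\<exists>a. anc (fst G) j (snd G) = Some a \<and> snd (fst G) a \<noteq> None \<and>
        rooted_iso (ballT (DT (fst G) a) (snd G) r, snd G) ?K)"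
      using \<open>G \<in> RFT\<close> unfolding Eset_def Qt_def by auto
  qed
  have sub: "gen r ?K \<subseteq> RFT" "Eset r j ?K j \<subseteq> RFT" "Eset r j ?K (Suc j) \<subseteq> RFT"
    unfolding gen_def Eset_def by auto
  show "gen r ?K = Eset r j ?K j - Eset r j ?K (Suc j)"
  proof
    show "gen r ?K \<subseteq> Eset r j ?K j - Eset r j ?K (Suc j)"
    proof
      fix G assume g: "G \<in> gen r ?K"
      then have G: "G \<in> RFT" using sub by blast
      then show "G \<in> Eset r j ?K j - Eset r j ?K (Suc j)" using ch[OF G] e1[OF G] e2[OF G] g by force
    qed
  next
    show "Eset r j ?K j - Eset r j ?K (Suc j) \<subseteq> gen r ?K"
    proof
      fix G assume g: "G \<in> Eset r j ?K j - Eset r j ?K (Suc j)"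
      then have G: "G \<in> RFT" using sub by blast
      then show "G \<in> gen r ?K" using ch[OF G] e1[OF G] e2[OF G] g by force
    qed
  qed
  show "Eset r j ?K (Suc j) \<subseteq> Eset r j ?K j"
  proof
    fix G assume g: "G \<in> Eset r j ?K (Suc j)"
    then have G: "G \<in> RFT" using sub by blast
    then show "G \<in> Eset r j ?K j" using e1[OF G] e2[OF G] g by blast
  qed
qed

lemma exists_top:
  assumes "anc A r u = None" "anc A 0 u \<noteq> None"
  shows "\<exists>j t. j < r \<and> anc A j u = Some t \<and> snd A t = None"
proof -
  define j where "j = (LEAST k. anc A (Suc k) u = None)"
  have r0: "r \<noteq> 0"
  proof
    assume "r = 0"
    then show False using assms(1) by simp
  qed
  have "anc A (Suc (r - 1)) u = None" using assms r0 by simp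
  then have j1: "anc A (Suc j) u = None" and j2: "j \<le> r - 1"
    unfolding j_def by (auto intro: LeastI Least_le)
  have "anc A j u \<noteq> None"
  proof (cases j)
    case 0 then show ?thesis using assms by simp
  next
    case (Suc j')
    then have "j' < j" by simp
    then show ?thesis using not_less_Least[of j' "\<lambda>k. anc A (Suc k) u = None"] Suc unfolding j_def by simp
  qed
  then obtain t where t: "anc A j u = Some t" by blast
  then have "snd A t = None" using j1 anc_Suc_last[of A j u] by simp
  moreover have "j < r" using j2 r0 by simp
  ultimately show ?thesis using t by blast
qed

theorem lemma4p18:
  fixes M1 M2 :: "(ftree \<times> nat) measure"
  assumes "prob_space M1" and "prob_space M2"
    and "sets M1 = sets rooted_space" and "sets M2 = sets rooted_space"
    and "unimodular M1" and "unimodular M2"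
    and "distr M1 rooted_space desc_tree = distr M2 rooted_space desc_tree"
  shows "M1 = M2"
proof -
  interpret p1: prob_space M1 by fact
  interpret p2: prob_space M2 by fact
  have eqE: "\<And>j m r K. j \<le> m \<Longrightarrow> emeasure M1 (Eset r j K m) = emeasure M2 (Eset r j K m)"
    using Eset_eq[OF assms(3,4,5,6,7)] by blast
  show ?thesis
  proof (rule measure_eqI_generator_eq[OF gens_Int_stable gens_Pow])
    show "sets M1 = sigma_sets RFT {gen r K | r K. True}" using assms(3) sets_rooted by simp
    show "sets M2 = sigma_sets RFT {gen r K | r K. True}" using assms(4) sets_rooted by simp
    show "range (\<lambda>i::nat. RFT) \<subseteq> {gen r K | r K. True}" using RFT_gen by blast
    show "(\<Union>i::nat. RFT) = RFT" by simp
    show "\<And>i::nat. emeasure M1 RFT \<noteq> \<infinity>" using p1.emeasure_finite by simp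
  next
    fix X assume "X \<in> {gen r K | r K. True}"
    then obtain r K where X: "X = gen r K" by blast
    show "emeasure M1 X = emeasure M2 X"
    proof (cases "X = {}")
      case True then show ?thesis by simp
    next
      case False
      then obtain G0 where G0: "G0 \<in> gen r K" using X by blast
      have XK: "X = gen r (rball G0 r)" using gen_rep[OF G0] X by simp
      have R0: "G0 \<in> RFT" using G0 unfolding gen_def by auto
      obtain T0 u0 where T0: "G0 = (T0,u0)" "family_tree T0" "u0 \<in> fst T0" using R0 unfolding RFT_def by auto
      show ?thesis
      proof (cases "anc (ballT T0 u0 r) r u0 = None")
        case False
        have "X = Eset r r (rball G0 r) r" using case1[OF T0(1) R0 False] XK by simp
        then show ?thesis using eqE by simp
      next
        case True
        obtain j t where jt: "j < r" "anc (ballT T0 u0 r) j u0 = Some t" "snd (ballT T0 u0 r) t = None"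
          using exists_top[OF True] by auto
        have X2: "X = Eset r j (rball G0 r) j - Eset r j (rball G0 r) (Suc j)"
          and S2: "Eset r j (rball G0 r) (Suc j) \<subseteq> Eset r j (rball G0 r) j"
          using case2[OF T0(1) R0 jt(2,3,1)] XK by simp_all
        have m1: "Eset r j (rball G0 r) j \<in> sets M1" "Eset r j (rball G0 r) (Suc j) \<in> sets M1"
          using Eset_meas assms(3) by auto
        have m2: "Eset r j (rball G0 r) j \<in> sets M2" "Eset r j (rball G0 r) (Suc j) \<in> sets M2"
          using Eset_meas assms(4) by auto
        have "emeasure M1 X = emeasure M1 (Eset r j (rball G0 r) j) - emeasure M1 (Eset r j (rball G0 r) (Suc j))"
        proof -
          have "emeasure M1 (Eset r j (rball G0 r) (Suc j)) \<noteq> \<infinity>" using p1.emeasure_finite by simp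
          then show ?thesis unfolding X2 by (rule emeasure_Diff[OF _ m1(1,2) S2])
        qed
        also have "\<dots> = emeasure M2 (Eset r j (rball G0 r) j) - emeasure M2 (Eset r j (rball G0 r) (Suc j))"
          using eqE by simp
        also have "\<dots> = emeasure M2 X"
        proof -
          have "emeasure M2 (Eset r j (rball G0 r) (Suc j)) \<noteq> \<infinity>" using p2.emeasure_finite by simp
          then show ?thesis unfolding X2 by (rule emeasure_Diff[OF _ m2(1,2) S2, symmetric])
        qed
        finally show ?thesis .
      qed
    qed
  qed
qed


end
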